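(* Let $p=p(n)$ satisfy $6/n\le p(n)<1$ and $p(n)\log n\to 0$ as $n\to\infty$, and let $G\sim D(n,p)$. Then with probability $1-o(1)$, $$h_1(G)\ge \frac{p^{-1}}{20\log(p^{-1})}\quad\text{and}\quad h_2(G)\ge\frac{p^{-1}}{\log^2(p^{-1})}.$$
   Context: $D(n,p)$ is the distribution on DAGs with vertex set $\{1,\dots,n\}$ assigning each DAG with $e$ edges probability proportional to $(p/(1-p))^e$. The tower decomposition of a DAG is $(H_1,\dots,H_s)$ with $H_1$ the set of sources (vertices without parents), $H_2$ the set of sources of the graph with $H_1$ removed, and so on; $h_i(G)=|H_i|$ (with $h_2(G)=0$ if $s=1$). $\log$ is the natural logarithm. *)

theory Defs
  imports Complex_Main
begin

text \<open>A DAG on vertex set {1..n} is represented by its set of directed edges (u,v)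
  (meaning u is a parent of v), an acyclic relation on {1..n}.\<close>

definition dags :: "nat \<Rightarrow> (nat \<times> nat) set set" where
  "dags n = {E. E \<subseteq> {1..n} \<times> {1..n} \<and> acyclic E}"

definition dag_weight :: "real \<Rightarrow> (nat \<times> nat) set \<Rightarrow> real" where
  "dag_weight p E = (p / (1 - p)) ^ card E"

definition dag_prob :: "nat \<Rightarrow> real \<Rightarrow> ((nat \<times> nat) set \<Rightarrow> bool) \<Rightarrow> real" where
  "dag_prob n p P =
     (\<Sum>E\<in>{E \<in> dags n. P E}. dag_weight p E) / (\<Sum>E\<in>dags n. dag_weight p E)"

definition sources :: "nat set \<Rightarrow> (nat \<times> nat) set \<Rightarrow> nat set" where
  "sources V E = {v \<in> V. \<not> (\<exists>u\<in>V. (u, v) \<in> E)}"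

definition H1 :: "nat \<Rightarrow> (nat \<times> nat) set \<Rightarrow> nat set" where
  "H1 n E = sources {1..n} E"

definition H2 :: "nat \<Rightarrow> (nat \<times> nat) set \<Rightarrow> nat set" where
  "H2 n E = sources ({1..n} - H1 n E) E"

definition h1 :: "nat \<Rightarrow> (nat \<times> nat) set \<Rightarrow> nat" where
  "h1 n E = card (H1 n E)"

definition h2 :: "nat \<Rightarrow> (nat \<times> nat) set \<Rightarrow> nat" where
  "h2 n E = card (H2 n E)"

end

theory Submission
  imports Defs "HOL-Library.FuncSet" "HOL-Real_Asymp.Real_Asymp"
begin

lemma sum_pow_card:
  fixes q :: real
  assumes "finite X"
  shows "(\<Sum>D\<in>Pow X. q ^ card D) = (1 + q) ^ card X"
proof -
  have "(\<Prod>x\<in>X. q + 1) = (\<Sum>D\<in>Pow X. (\<Prod>x\<in>D. q) * (\<Prod>x\<in>X-D. 1))"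
    by (rule prod_add[OF assms])
  then show ?thesis by (simp add: add.commute)
qed

lemma exp_ge_term:
  fixes x :: real
  assumes "0 \<le> x"
  shows "x ^ r / fact r \<le> exp x"
proof -
  have s: "summable (\<lambda>n. x ^ n / fact n)"
    using summable_exp[of x] by (simp add: field_simps)
  have "exp x = (\<Sum>n. x ^ n / fact n)"
    using exp_converges[of x] by (simp add: sums_iff field_simps)
  moreover have "(\<Sum>n\<in>{..<Suc r}. x ^ n / fact n) \<le> (\<Sum>n. x ^ n / fact n)"
    by (rule sum_le_suminf[OF s]) (use assms in auto)
  moreover have "x ^ r / fact r \<le> (\<Sum>n\<in>{..<Suc r}. x ^ n / fact n)"
    using assms by (intro member_le_sum) auto
  ultimately show ?thesis by linarith
qed


lemma sum_inj_le:
  fixes g :: "'b \<Rightarrow> real"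
  assumes "finite B" "inj_on \<phi> A" "\<phi> ` A \<subseteq> B" "\<And>y. y \<in> B \<Longrightarrow> 0 \<le> g y"
  shows "(\<Sum>x\<in>A. g (\<phi> x)) \<le> (\<Sum>y\<in>B. g y)"
proof -
  have "(\<Sum>x\<in>A. g (\<phi> x)) = (\<Sum>y\<in>\<phi> ` A. g y)"
    using sum.reindex[OF assms(2), of g] by simp
  also have "\<dots> \<le> (\<Sum>y\<in>B. g y)"
    by (rule sum_mono2[OF assms(1) assms(3)]) (use assms(4,3) in auto)
  finally show ?thesis .
qed


lemma fact_choose_le: "r \<le> n \<Longrightarrow> fact r * (n choose r) \<le> (n::nat) ^ r"
proof -
  assume a: "r \<le> n"
  have e: "fact r * (n choose r) * fact (n - r) = fact n"
    using binomial_fact_lemma[OF a] by (simp add: algebra_simps)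
  have "fact n div fact (n - r) = fact r * (n choose r)"
    using e by (metis fact_nonzero nonzero_mult_div_cancel_right)
  with fact_div_fact_le_pow[OF a] show ?thesis by simp
qed


lemma tail_bound:
  fixes q :: real
  assumes "finite X" "0 \<le> q"
  shows "(\<Sum>D\<in>{D. D \<subseteq> X \<and> r \<le> card D}. q ^ card D)
          \<le> real (card X choose r) * q ^ r * (1 + q) ^ card X"
proof -
  define R where "R D = (SOME R. R \<subseteq> D \<and> card R = r)" for D :: "'a set"
  let ?A = "{D. D \<subseteq> X \<and> r \<le> card D}"
  let ?B = "{R. R \<subseteq> X \<and> card R = r} \<times> Pow X"
  have R: "R D \<subseteq> D \<and> card (R D) = r" if "D \<in> ?A" for D
  proof -
    have "finite D" using that assms(1) finite_subset by auto
    moreover have "r \<le> card D" using that by simp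
    ultimately obtain S where "S \<subseteq> D" "card S = r" using obtain_subset_with_card_n by metis
    then have "\<exists>S. S \<subseteq> D \<and> card S = r" by blast
    then show ?thesis unfolding R_def by (rule someI_ex)
  qed
  define \<phi> where "\<phi> D = (R D, D - R D)" for D
  have inj: "inj_on \<phi> ?A"
  proof (rule inj_onI)
    fix D1 D2 assume a: "D1 \<in> ?A" "D2 \<in> ?A" "\<phi> D1 = \<phi> D2"
    have pe: "(R D1, D1 - R D1) = (R D2, D2 - R D2)" using a(3) unfolding \<phi>_def .
    have e1: "R D1 = R D2" "D1 - R D1 = D2 - R D2" using arg_cong[OF pe, of fst] arg_cong[OF pe, of snd] by simp_all
    have "D1 = R D1 \<union> (D1 - R D1)" using R[OF a(1)] by blast
    also have "\<dots> = R D2 \<union> (D2 - R D2)" using e1 by simp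
    also have "\<dots> = D2" using R[OF a(2)] by blast
    finally show "D1 = D2" .
  qed
  have img: "\<phi> ` ?A \<subseteq> ?B"
  proof
    fix y assume "y \<in> \<phi> ` ?A"
    then obtain D where D: "D \<in> ?A" "y = \<phi> D" by blast
    then show "y \<in> ?B" using R[OF D(1)] unfolding \<phi>_def by auto
  qed
  have eq: "q ^ card D = (\<lambda>(R, D'). q ^ card R * q ^ card D') (\<phi> D)" if "D \<in> ?A" for D
  proof -
    have fD: "finite D" using that assms(1) finite_subset by auto
    have s1: "R D \<subseteq> D" using R[OF that] by blast
    have c1: "card (D - R D) = card D - card (R D)"
      using card_Diff_subset[OF finite_subset[OF s1 fD] s1] .
    have c2: "card (R D) \<le> card D" using card_mono[OF fD s1] .
    have "card D = card (R D) + card (D - R D)" using c1 c2 by simp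
    then show ?thesis unfolding \<phi>_def using R[OF that] by (simp add: power_add)
  qed
  have "(\<Sum>D\<in>?A. q ^ card D) = (\<Sum>D\<in>?A. (\<lambda>(R, D'). q ^ card R * q ^ card D') (\<phi> D))"
    using eq by (rule sum.cong[OF refl])
  also have "\<dots> \<le> (\<Sum>y\<in>?B. (\<lambda>(R, D'). q ^ card R * q ^ card D') y)"
  proof (rule sum_inj_le[OF _ inj img])
    show "finite ?B" using assms(1) by simp
    show "0 \<le> (\<lambda>(R, D'). q ^ card R * q ^ card D') y" for y
      using assms(2) by (cases y) simp
  qed
  also have "\<dots> = (\<Sum>R\<in>{R. R \<subseteq> X \<and> card R = r}. \<Sum>D'\<in>Pow X. q ^ card R * q ^ card D')"
    by (rule sum.cartesian_product[symmetric])
  also have "\<dots> = (\<Sum>R\<in>{R. R \<subseteq> X \<and> card R = r}. q ^ r * (1 + q) ^ card X)"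
  proof (rule sum.cong[OF refl])
    fix R assume "R \<in> {R. R \<subseteq> X \<and> card R = r}"
    then have "card R = r" by simp
    then show "(\<Sum>D'\<in>Pow X. q ^ card R * q ^ card D') = q ^ r * (1 + q) ^ card X"
      by (simp add: sum_distrib_left[symmetric] sum_pow_card[OF assms(1)])
  qed
  also have "\<dots> = real (card X choose r) * q ^ r * (1 + q) ^ card X"
    using n_subsets[OF assms(1), of r] by simp
  finally show ?thesis .
qed


lemma tail_bound2:
  fixes q :: real
  assumes "finite X" "0 \<le> q" "0 < r"
  shows "(\<Sum>D\<in>{D. D \<subseteq> X \<and> r \<le> card D}. q ^ card D)
          \<le> (exp 1 * real (card X) * q / real r) ^ r * exp (real (card X) * q)"
proof (cases "r \<le> card X")
  case False
  have E: "{D. D \<subseteq> X \<and> r \<le> card D} = {}"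
  proof (rule ccontr)
    assume "{D. D \<subseteq> X \<and> r \<le> card D} \<noteq> {}"
    then obtain D where "D \<subseteq> X" "r \<le> card D" by blast
    then have "card D \<le> card X" using card_mono[OF assms(1)] by blast
    with False \<open>r \<le> card D\<close> show False by linarith
  qed
  have "0 \<le> (exp 1 * real (card X) * q / real r) ^ r * exp (real (card X) * q)"
    using assms(2) by simp
  then show ?thesis unfolding E by simp
next
  case True
  define N where "N = real (card X)"
  have c0: "fact r * (card X choose r) \<le> card X ^ r" using fact_choose_le[OF True] .
  have c: "real (card X choose r) * fact r \<le> N ^ r"
  proof -
    have "real (fact r * (card X choose r)) \<le> real (card X ^ r)" using c0 by (rule of_nat_mono)
    then show ?thesis unfolding N_def by (simp add: mult.commute)
  qed
  have f: "real r ^ r / fact r \<le> exp (real r)" by (rule exp_ge_term) simp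
  have fpos: "(0::real) < fact r" by simp
  have rpos: "(0::real) < real r" using assms(3) by simp
  have s1: "real (card X choose r) \<le> N ^ r / fact r"
    using c fpos by (simp add: pos_le_divide_eq)
  have a1: "real (card X choose r) * q ^ r \<le> N ^ r / fact r * q ^ r"
    using s1 assms(2) by (intro mult_right_mono) simp_all
  have a2: "N ^ r / fact r * q ^ r = (N * q / real r) ^ r * (real r ^ r / fact r)"
    using rpos by (simp add: power_divide power_mult_distrib)
  have a3: "(N * q / real r) ^ r * (real r ^ r / fact r) \<le> (N * q / real r) ^ r * exp (real r)"
    using f assms(2) rpos N_def by (intro mult_left_mono) simp_all
  have a4: "(N * q / real r) ^ r * exp (real r) = (exp 1 * N * q / real r) ^ r"
  proof -
    have "exp (real r) = exp 1 ^ r" by (simp add: exp_of_nat_mult[symmetric])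
    then show ?thesis by (simp add: power_mult_distrib[symmetric] mult.commute mult.left_commute)
  qed
  have a: "real (card X choose r) * q ^ r \<le> (exp 1 * N * q / real r) ^ r"
    using a1 a2 a3 a4 by linarith
  have b: "(1 + q) ^ card X \<le> exp (N * q)"
  proof -
    have "1 + q \<le> exp q" using exp_ge_add_one_self[of q] by (simp add: add.commute)
    then have "(1 + q) ^ card X \<le> exp q ^ card X" using assms(2) by (intro power_mono) simp_all
    also have "\<dots> = exp (N * q)" unfolding N_def by (simp add: exp_of_nat_mult[symmetric])
    finally show ?thesis .
  qed
  have "(\<Sum>D\<in>{D. D \<subseteq> X \<and> r \<le> card D}. q ^ card D) \<le> real (card X choose r) * q ^ r * (1 + q) ^ card X"
    by (rule tail_bound[OF assms(1,2)])
  also have "\<dots> \<le> (exp 1 * N * q / real r) ^ r * exp (N * q)"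
  proof (rule mult_mono[OF a b])
    show "0 \<le> (exp 1 * N * q / real r) ^ r" using assms(2) N_def by simp
    show "0 \<le> (1 + q) ^ card X" using assms(2) by simp
  qed
  finally show ?thesis unfolding N_def .
qed


lemma grow_closed:
  assumes "finite R" "acyclic R" "finite W"
  shows "U0 \<subseteq> W \<Longrightarrow> (\<forall>(y,x)\<in>R. x\<in>U0 \<and> y\<in>W \<longrightarrow> y\<in>U0) \<Longrightarrow> card U0 + k = u \<Longrightarrow> u \<le> card W
     \<Longrightarrow> \<exists>U. U0 \<subseteq> U \<and> U \<subseteq> W \<and> card U = u \<and> (\<forall>(y,x)\<in>R. x\<in>U \<and> y\<in>W \<longrightarrow> y\<in>U)"
proof (induction k arbitrary: U0)
  case 0
  then show ?case by auto
next
  case (Suc k)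
  have wf: "wf R" using finite_acyclic_wf[OF assms(1,2)] .
  have fU0: "finite U0" using Suc.prems(1) assms(3) finite_subset by auto
  have "card U0 < card W" using Suc.prems(3,4) by simp
  then have "W - U0 \<noteq> {}" using Suc.prems(1) by auto
  then obtain x0 where "x0 \<in> W - U0" by blast
  then obtain x where x: "x \<in> W - U0" "\<And>y. (y, x) \<in> R \<Longrightarrow> y \<notin> W - U0"
    by (rule wfE_min[OF wf]) blast
  let ?U1 = "insert x U0"
  have c1: "?U1 \<subseteq> W" using x(1) Suc.prems(1) by blast
  have c2: "\<forall>(y,z)\<in>R. z\<in>?U1 \<and> y\<in>W \<longrightarrow> y\<in>?U1"
  proof (intro ballI impI, clarify)
    fix y z assume "(y, z) \<in> R" "z \<in> ?U1" "y \<in> W" "y \<notin> U0"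
    then show "y = x"
    proof (cases "z = x")
      case True
      then show ?thesis using x(2) \<open>(y, z) \<in> R\<close> \<open>y \<in> W\<close> \<open>y \<notin> U0\<close> by blast
    next
      case False
      then have "z \<in> U0" using \<open>z \<in> ?U1\<close> by simp
      then show ?thesis using Suc.prems(2) \<open>(y, z) \<in> R\<close> \<open>y \<in> W\<close> \<open>y \<notin> U0\<close> by blast
    qed
  qed
  have c3: "card ?U1 + k = u" using Suc.prems(3) x(1) fU0 by simp
  obtain U where U: "?U1 \<subseteq> U" "U \<subseteq> W" "card U = u" "\<forall>(y,x)\<in>R. x\<in>U \<and> y\<in>W \<longrightarrow> y\<in>U"
    using Suc.IH[OF c1 c2 c3 Suc.prems(4)] by blast
  then show ?case by blast
qed

lemma grow_closed':
  assumes "finite R" "acyclic R" "finite W" "U0 \<subseteq> W" "\<forall>(y,x)\<in>R. x\<in>U0 \<and> y\<in>W \<longrightarrow> y\<in>U0"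
    "card U0 \<le> u" "u \<le> card W"
  shows "\<exists>U. U0 \<subseteq> U \<and> U \<subseteq> W \<and> card U = u \<and> (\<forall>(y,x)\<in>R. x\<in>U \<and> y\<in>W \<longrightarrow> y\<in>U)"
  using grow_closed[OF assms(1-3) assms(4,5), of "u - card U0" u] assms(6,7) by simp

lemma dags_finite: "finite (dags n)"
proof -
  have "dags n \<subseteq> Pow ({1..n} \<times> {1..n})" unfolding dags_def by auto
  then show ?thesis by (rule finite_subset) simp
qed

lemma dagsD: "G \<in> dags n \<Longrightarrow> G \<subseteq> {1..n} \<times> {1..n} \<and> acyclic G \<and> finite G"
  unfolding dags_def using finite_subset[of G "{1..n} \<times> {1..n}"] by auto

lemma H1_eq: "G \<subseteq> {1..n} \<times> {1..n} \<Longrightarrow> H1 n G = {v \<in> {1..n}. \<forall>u. (u, v) \<notin> G}"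
  unfolding H1_def sources_def by auto

lemma H2_eq: "G \<subseteq> {1..n} \<times> {1..n} \<Longrightarrow>
   H2 n G = {v \<in> {1..n} - H1 n G. \<forall>u. u \<in> {1..n} - H1 n G \<longrightarrow> (u, v) \<notin> G}"
  unfolding H2_def sources_def by auto


lemma A1_bound:
  fixes q :: real
  assumes q: "0 \<le> q" and mu: "m < u" and un: "u \<le> n"
  shows "(\<Sum>G\<in>{G\<in>dags n. h1 n G \<le> m}. q ^ card G)
     \<le> (\<Sum>G\<in>dags n. q ^ card G) *
        ((exp 1 * real (u*u) * q / real (u - m)) ^ (u - m) * exp (real (u*u) * q))"
proof -
  let ?V = "{1..n::nat}"
  let ?A = "{G\<in>dags n. h1 n G \<le> m}"
  define cl where "cl G U \<longleftrightarrow> H1 n G \<subseteq> U \<and> U \<subseteq> ?V \<and> card U = u \<and> (\<forall>(y,x)\<in>G. x\<in>U \<and> y\<in>?V \<longrightarrow> y\<in>U)" for G U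
  define UU where "UU G = (SOME U. cl G U)" for G
  have UU: "cl G (UU G)" if "G \<in> ?A" for G
  proof -
    have G: "G \<subseteq> ?V \<times> ?V" "acyclic G" "finite G" using dagsD that by auto
    have "\<exists>U. cl G U" unfolding cl_def
    proof (rule grow_closed'[OF G(3) G(2)])
      show "H1 n G \<subseteq> ?V" unfolding H1_def sources_def by auto
      show "\<forall>(y,x)\<in>G. x \<in> H1 n G \<and> y \<in> ?V \<longrightarrow> y \<in> H1 n G" using H1_eq[OF G(1)] by auto
      show "card (H1 n G) \<le> u" using that mu unfolding h1_def by simp
      show "u \<le> card ?V" using un by simp
    qed simp
    then show ?thesis unfolding UU_def by (rule someI_ex)
  qed
  define DD where "DD G = G \<inter> (UU G \<times> UU G)" for G
  define \<phi> where "\<phi> G = (G - DD G, DD G)" for G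
  let ?B = "Sigma {G'\<in>dags n. card (H1 n G') = u} (\<lambda>G'. {D. D \<subseteq> H1 n G' \<times> H1 n G' \<and> u - m \<le> card D})"
  have main: "\<phi> G \<in> ?B \<and> card G = card (G - DD G) + card (DD G)" if GA: "G \<in> ?A" for G
  proof -
    have G: "G \<subseteq> ?V \<times> ?V" "acyclic G" "finite G" using dagsD GA by auto
    have U: "cl G (UU G)" using UU[OF GA] .
    let ?U = "UU G"
    have Gd: "G - DD G \<in> dags n" using G unfolding dags_def by (auto intro: acyclic_subset)
    have H: "H1 n (G - DD G) = ?U"
    proof
      show "H1 n (G - DD G) \<subseteq> ?U"
      proof
        fix v assume v: "v \<in> H1 n (G - DD G)"
        show "v \<in> ?U"
        proof (rule ccontr)
          assume nv: "v \<notin> ?U"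
          then have "v \<notin> H1 n G" using U unfolding cl_def by blast
          moreover have "v \<in> ?V" using v unfolding H1_def sources_def by auto
          ultimately obtain y where "y \<in> ?V" "(y, v) \<in> G" using H1_eq[OF G(1)] G(1) by blast
          then have "(y, v) \<in> G - DD G" using nv unfolding DD_def by auto
          then show False using v \<open>y \<in> ?V\<close> unfolding H1_def sources_def by auto
        qed
      qed
      show "?U \<subseteq> H1 n (G - DD G)"
      proof
        fix v assume v: "v \<in> ?U"
        have "v \<in> ?V" using U v unfolding cl_def by auto
        moreover have "\<not> (\<exists>y\<in>?V. (y, v) \<in> G - DD G)"
        proof
          assume "\<exists>y\<in>?V. (y, v) \<in> G - DD G"
          then obtain y where y: "y \<in> ?V" "(y, v) \<in> G" "(y, v) \<notin> DD G" by auto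
          have "y \<in> ?U" using U y v unfolding cl_def by auto
          then show False using y v unfolding DD_def by auto
        qed
        ultimately show "v \<in> H1 n (G - DD G)" unfolding H1_def sources_def by auto
      qed
    qed
    have cardD: "u - m \<le> card (DD G)"
    proof -
      define par where "par x = (SOME y. y \<in> ?V \<and> (y, x) \<in> G)" for x
      have par: "par x \<in> ?U \<and> (par x, x) \<in> DD G" if x: "x \<in> ?U - H1 n G" for x
      proof -
        have xV: "x \<in> ?V" using x U unfolding cl_def by auto
        then have "\<exists>y. y \<in> ?V \<and> (y, x) \<in> G" using x H1_eq[OF G(1)] G(1) by blast
        then have py: "par x \<in> ?V \<and> (par x, x) \<in> G" unfolding par_def by (rule someI_ex)
        then have "par x \<in> ?U" using U x unfolding cl_def by auto
        then show ?thesis using py x unfolding DD_def by auto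
      qed
      have inj: "inj_on (\<lambda>x. (par x, x)) (?U - H1 n G)" by (rule inj_onI) auto
      have fD: "finite (DD G)" using G(3) unfolding DD_def by auto
      have "card (?U - H1 n G) \<le> card (DD G)"
        by (rule card_inj_on_le[OF inj _ fD]) (use par in auto)
      moreover have "card (?U - H1 n G) = u - h1 n G"
      proof -
        have fU: "finite ?U" using U unfolding cl_def by (auto intro: finite_subset)
        have "H1 n G \<subseteq> ?U" using U unfolding cl_def by auto
        then show ?thesis using card_Diff_subset[OF finite_subset[OF _ fU]] U unfolding cl_def h1_def by auto
      qed
      moreover have "h1 n G \<le> m" using GA by simp
      ultimately show ?thesis by linarith
    qed
    have Dsub0: "DD G \<subseteq> ?U \<times> ?U" unfolding DD_def by auto
    have Dsub: "DD G \<subseteq> H1 n (G - DD G) \<times> H1 n (G - DD G)" using Dsub0 H by simp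
    have cU: "card (H1 n (G - DD G)) = u" using H U unfolding cl_def by simp
    have "\<phi> G \<in> ?B" unfolding \<phi>_def using Gd cU Dsub cardD by auto
    moreover have "card G = card (G - DD G) + card (DD G)"
    proof -
      have "DD G \<subseteq> G" unfolding DD_def by auto
      then show ?thesis using card_Diff_subset[OF finite_subset[OF _ G(3)]] card_mono[OF G(3)]
        by (metis le_add_diff_inverse2)
    qed
    ultimately show ?thesis by blast
  qed
  have inj: "inj_on \<phi> ?A"
  proof (rule inj_onI)
    fix G1 G2 assume a: "G1 \<in> ?A" "G2 \<in> ?A" "\<phi> G1 = \<phi> G2"
    have pe: "(G1 - DD G1, DD G1) = (G2 - DD G2, DD G2)" using a(3) unfolding \<phi>_def .
    have e: "G1 - DD G1 = G2 - DD G2" "DD G1 = DD G2"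
      using arg_cong[OF pe, of fst] arg_cong[OF pe, of snd] by simp_all
    have "G1 = (G1 - DD G1) \<union> DD G1" unfolding DD_def by auto
    also have "\<dots> = (G2 - DD G2) \<union> DD G2" using e by simp
    also have "\<dots> = G2" unfolding DD_def by auto
    finally show "G1 = G2" .
  qed
  let ?g = "\<lambda>(G', D). q ^ card G' * q ^ card (D::(nat\<times>nat) set)"
  let ?bnd = "(exp 1 * real (u*u) * q / real (u - m)) ^ (u - m) * exp (real (u*u) * q)"
  have finB: "finite ?B"
  proof (rule finite_SigmaI)
    show "finite {G' \<in> dags n. card (H1 n G') = u}" using dags_finite by simp
    fix G' show "finite {D. D \<subseteq> H1 n G' \<times> H1 n G' \<and> u - m \<le> card D}"
      by (rule finite_subset[of _ "Pow (H1 n G' \<times> H1 n G')"]) (auto simp: H1_def sources_def)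
  qed
  have "(\<Sum>G\<in>?A. q ^ card G) = (\<Sum>G\<in>?A. ?g (\<phi> G))"
    by (rule sum.cong[OF refl]) (use main in \<open>simp add: \<phi>_def power_add\<close>)
  also have "\<dots> \<le> (\<Sum>y\<in>?B. ?g y)"
  proof (rule sum_inj_le[OF finB inj])
    show "\<phi> ` ?A \<subseteq> ?B" using main by blast
    show "0 \<le> ?g y" for y using q by (cases y) simp
  qed
  also have "\<dots> = (\<Sum>G'\<in>{G'\<in>dags n. card (H1 n G') = u}. q ^ card G' *
                   (\<Sum>D\<in>{D. D \<subseteq> H1 n G' \<times> H1 n G' \<and> u - m \<le> card D}. q ^ card D))"
    by (subst sum.Sigma[symmetric]) (auto simp: sum_distrib_left dags_finite H1_def sources_def
         intro: finite_subset[of _ "Pow ({1..n} \<times> {1..n})"])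
  also have "\<dots> \<le> (\<Sum>G'\<in>{G'\<in>dags n. card (H1 n G') = u}. q ^ card G' * ?bnd)"
  proof (rule sum_mono)
    fix G' assume G': "G' \<in> {G'\<in>dags n. card (H1 n G') = u}"
    have fH: "finite (H1 n G' \<times> H1 n G')" unfolding H1_def sources_def by auto
    have cH: "card (H1 n G' \<times> H1 n G') = u * u" using G' by (simp add: card_cartesian_product)
    have "(\<Sum>D\<in>{D. D \<subseteq> H1 n G' \<times> H1 n G' \<and> u - m \<le> card D}. q ^ card D) \<le> ?bnd"
      using tail_bound2[OF fH q, of "u - m"] mu cH by simp
    then show "q ^ card G' * (\<Sum>D\<in>{D. D \<subseteq> H1 n G' \<times> H1 n G' \<and> u - m \<le> card D}. q ^ card D) \<le> q ^ card G' * ?bnd"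
      using q by (intro mult_left_mono) simp_all
  qed
  also have "\<dots> = (\<Sum>G'\<in>{G'\<in>dags n. card (H1 n G') = u}. q ^ card G') * ?bnd"
    by (simp add: sum_distrib_right)
  also have "\<dots> \<le> (\<Sum>G\<in>dags n. q ^ card G) * ?bnd"
  proof (rule mult_right_mono)
    show "(\<Sum>G'\<in>{G'\<in>dags n. card (H1 n G') = u}. q ^ card G') \<le> (\<Sum>G\<in>dags n. q ^ card G)"
      by (rule sum_mono2[OF dags_finite]) (use q in auto)
    show "0 \<le> ?bnd" using q by simp
  qed
  finally show ?thesis .
qed


lemma acyclic_union_src:
  assumes "acyclic R" "\<And>a b c. (a, b) \<in> Z \<Longrightarrow> (c, a) \<notin> R \<union> Z"
  shows "acyclic (R \<union> Z)"
proof -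
  have key: "(a, b) \<in> (R \<union> Z)\<^sup>+ \<Longrightarrow> (a, b) \<in> R\<^sup>+ \<or> (a, b) \<in> Z \<or> (a, b) \<in> Z O R\<^sup>+" for a b
  proof (induction rule: trancl_induct)
    case (base y)
    then show ?case by auto
  next
    case (step y z)
    show ?case
    proof (cases "(y, z) \<in> Z")
      case True
      then have "(a, y) \<notin> R \<union> Z" for a using assms(2) by blast
      moreover have "\<exists>c. (c, y) \<in> R \<union> Z" using step.hyps(1) by (meson tranclD2)
      ultimately show ?thesis by blast
    next
      case False
      then have yz: "(y, z) \<in> R" using step.hyps(2) by blast
      from step.IH show ?thesis
      proof (elim disjE)
        assume "(a, y) \<in> R\<^sup>+" then have "(a, z) \<in> R\<^sup>+" using yz by (rule trancl_into_trancl)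
        then show ?thesis by blast
      next
        assume "(a, y) \<in> Z" then have "(a, z) \<in> Z O R\<^sup>+" using yz by blast
        then show ?thesis by blast
      next
        assume "(a, y) \<in> Z O R\<^sup>+"
        then obtain c where "(a, c) \<in> Z" "(c, y) \<in> R\<^sup>+" by blast
        then have "(c, z) \<in> R\<^sup>+" using yz by (blast intro: trancl_into_trancl)
        then show ?thesis using \<open>(a, c) \<in> Z\<close> by blast
      qed
    qed
  qed
  show ?thesis unfolding acyclic_def
  proof (intro allI notI)
    fix x assume "(x, x) \<in> (R \<union> Z)\<^sup>+"
    from key[OF this] show False
    proof (elim disjE)
      assume "(x, x) \<in> R\<^sup>+" then show False using assms(1) unfolding acyclic_def by blast
    next
      assume "(x, x) \<in> Z" then show False using assms(2) by blast
    next
      assume "(x, x) \<in> Z O R\<^sup>+"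
      then obtain y where "(x, y) \<in> Z" "(y, x) \<in> R\<^sup>+" by blast
      then obtain c where "(c, x) \<in> R" by (meson tranclD2)
      then show False using assms(2) \<open>(x, y) \<in> Z\<close> by blast
    qed
  qed
qed


lemma A2_bound:
  fixes q :: real
  assumes q: "0 \<le> q" and mu: "m < u" and k0: "0 < k0"
  shows "(\<Sum>G\<in>{G\<in>dags n. k0 \<le> h1 n G \<and> h1 n G + u \<le> n \<and> h2 n G \<le> m}. q ^ card G) * (min 1 (real k0 * q)) ^ u
     \<le> (\<Sum>G\<in>dags n. q ^ card G) *
        (2 ^ u * ((exp 1 * real (u*u) * q / real (u - m)) ^ (u - m) * exp (real (u*u) * q)))"
proof -
  let ?V = "{1..n::nat}"
  let ?A = "{G\<in>dags n. k0 \<le> h1 n G \<and> h1 n G + u \<le> n \<and> h2 n G \<le> m}"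
  define WW where "WW G = ?V - H1 n G" for G
  define cl where "cl G U \<longleftrightarrow> H2 n G \<subseteq> U \<and> U \<subseteq> WW G \<and> card U = u \<and> (\<forall>(y,x)\<in>G. x\<in>U \<and> y\<in>WW G \<longrightarrow> y\<in>U)" for G U
  define UU where "UU G = (SOME U. cl G U)" for G
  define DD where "DD G = G \<inter> (UU G \<times> UU G)" for G
  define U0 where "U0 G = {x \<in> UU G. \<forall>s\<in>H1 n G. (s, x) \<notin> G}" for G
  define ZZ where "ZZ G f = (\<lambda>x. (f x, x)) ` U0 G" for G and f :: "nat \<Rightarrow> nat"
  define Gh where "Gh G f = (G - DD G) \<union> ZZ G f" for G f
  define \<psi> where "\<psi> Gf = (Gh (fst Gf) (snd Gf), U0 (fst Gf), DD (fst Gf))" for Gf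
  let ?C = "Sigma ?A (\<lambda>G. PiE (U0 G) (\<lambda>_. H1 n G))"
  let ?B = "Sigma {G'\<in>dags n. card (H2 n G') = u}
             (\<lambda>G'. Pow (H2 n G') \<times> {D. D \<subseteq> H2 n G' \<times> H2 n G' \<and> u - m \<le> card D})"
  have UU: "cl G (UU G)" if GA: "G \<in> ?A" for G
  proof -
    have G: "G \<subseteq> ?V \<times> ?V" "acyclic G" "finite G" using dagsD GA by auto
    have "\<exists>U. cl G U" unfolding cl_def
    proof (rule grow_closed'[OF G(3) G(2)])
      show "finite (WW G)" unfolding WW_def by simp
      show "H2 n G \<subseteq> WW G" unfolding H2_def sources_def WW_def by auto
      show "\<forall>(y,x)\<in>G. x \<in> H2 n G \<and> y \<in> WW G \<longrightarrow> y \<in> H2 n G" using H2_eq[OF G(1)] unfolding WW_def by auto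
      show "card (H2 n G) \<le> u" using GA mu unfolding h2_def by simp
      have "card (WW G) = n - h1 n G" unfolding WW_def h1_def
        by (subst card_Diff_subset) (auto simp: H1_def sources_def)
      then show "u \<le> card (WW G)" using GA by auto
    qed
    then show ?thesis unfolding UU_def by (rule someI_ex)
  qed
  have U0fin: "finite (U0 G) \<and> card (U0 G) \<le> u" if GA: "G \<in> ?A" for G
  proof -
    have U: "cl G (UU G)" using UU[OF GA] .
    have "finite (UU G)" using U unfolding cl_def WW_def by (auto intro: finite_subset)
    moreover have "U0 G \<subseteq> UU G" unfolding U0_def by auto
    ultimately show ?thesis using card_mono U unfolding cl_def by (metis finite_subset)
  qed
  have main: "\<psi> (G, f) \<in> ?B \<and> card G + card (U0 G) = card (Gh G f) + card (DD G) \<and>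
     H1 n (Gh G f) = H1 n G \<and> card (U0 G) \<le> u \<and> G = (Gh G f - H1 n G \<times> U0 G) \<union> DD G \<and>
     (\<forall>x\<in>U0 G. \<forall>s\<in>H1 n G. (s, x) \<in> Gh G f \<longleftrightarrow> s = f x)"
    if GA: "G \<in> ?A" and f: "f \<in> PiE (U0 G) (\<lambda>_. H1 n G)" for G and f :: "nat \<Rightarrow> nat"
  proof -
    have G: "G \<subseteq> ?V \<times> ?V" "acyclic G" "finite G" using dagsD GA by auto
    have U: "cl G (UU G)" using UU[OF GA] .
    let ?U = "UU G" and ?S = "H1 n G" and ?W = "WW G"
    have SV: "?S \<subseteq> ?V" unfolding H1_def sources_def by auto
    have UW: "?U \<subseteq> ?W" using U unfolding cl_def by auto
    have WV: "?W \<subseteq> ?V" "?W \<inter> ?S = {}" unfolding WW_def by auto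
    have U0U: "U0 G \<subseteq> ?U" unfolding U0_def by auto
    have Zsub: "ZZ G f \<subseteq> ?S \<times> U0 G" unfolding ZZ_def using f by auto
    have Z_disj: "(G - DD G) \<inter> (?S \<times> U0 G) = {}" unfolding U0_def by auto
    have Ssrc: "(c, s) \<notin> G" if "s \<in> ?S" for c s
      using that H1_eq[OF G(1)] by auto
    have GhV: "Gh G f \<subseteq> ?V \<times> ?V" unfolding Gh_def using G(1) Zsub SV U0U UW WV by blast
    have acyc: "acyclic (Gh G f)" unfolding Gh_def
    proof (rule acyclic_union_src)
      show "acyclic (G - DD G)" using G(2) by (auto intro: acyclic_subset)
      fix a b c assume ab: "(a, b) \<in> ZZ G f"
      then have aS: "a \<in> ?S" using Zsub by auto
      show "(c, a) \<notin> (G - DD G) \<union> ZZ G f"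
      proof
        assume "(c, a) \<in> (G - DD G) \<union> ZZ G f"
        then show False
        proof
          assume "(c, a) \<in> G - DD G" then show False using Ssrc[OF aS] by auto
        next
          assume "(c, a) \<in> ZZ G f"
          then have "a \<in> U0 G" using Zsub by auto
          then show False using aS U0U UW WV by auto
        qed
      qed
    qed
    have Ghd: "Gh G f \<in> dags n" unfolding dags_def using GhV acyc by auto
    have H1h: "H1 n (Gh G f) = ?S"
    proof -
      have "v \<in> H1 n (Gh G f) \<longleftrightarrow> v \<in> ?S" if vV: "v \<in> ?V" for v
      proof
        assume v: "v \<in> H1 n (Gh G f)"
        show "v \<in> ?S"
        proof (rule ccontr)
          assume vS: "v \<notin> ?S"
          have noin: "(y, v) \<notin> Gh G f" for y using v H1_eq[OF GhV] by auto
          show False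
          proof (cases "v \<in> U0 G")
            case True
            then have "(f v, v) \<in> ZZ G f" unfolding ZZ_def by auto
            then show False using noin unfolding Gh_def by auto
          next
            case False
            show False
            proof (cases "v \<in> ?U")
              case True
              then obtain s where "s \<in> ?S" "(s, v) \<in> G" using False unfolding U0_def by auto
              moreover have "s \<notin> ?U" using \<open>s \<in> ?S\<close> UW WV by auto
              ultimately have "(s, v) \<in> Gh G f" unfolding Gh_def DD_def by auto
              then show False using noin by blast
            next
              case nU: False
              obtain y where "(y, v) \<in> G" using vS vV H1_eq[OF G(1)] by auto
              then have "(y, v) \<in> Gh G f" using nU unfolding Gh_def DD_def by auto
              then show False using noin by blast
            qed
          qed
        qed
      next
        assume v: "v \<in> ?S"
        have "(y, v) \<notin> Gh G f" for y
        proof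
          assume "(y, v) \<in> Gh G f"
          then show False unfolding Gh_def
          proof
            assume "(y, v) \<in> G - DD G" then show False using Ssrc[OF v] by auto
          next
            assume "(y, v) \<in> ZZ G f"
            then have "v \<in> U0 G" using Zsub by auto
            then show False using v U0U UW WV by auto
          qed
        qed
        then show "v \<in> H1 n (Gh G f)" using H1_eq[OF GhV] vV by auto
      qed
      moreover have "H1 n (Gh G f) \<subseteq> ?V" unfolding H1_def sources_def by auto
      ultimately show ?thesis using SV by blast
    qed
    have H2h: "H2 n (Gh G f) = ?U"
    proof -
      have e: "H2 n (Gh G f) = {v \<in> ?W. \<forall>y. y \<in> ?W \<longrightarrow> (y, v) \<notin> Gh G f}"
        using H2_eq[OF GhV] H1h unfolding WW_def by simp
      have "v \<in> H2 n (Gh G f) \<longleftrightarrow> v \<in> ?U" if vW: "v \<in> ?W" for v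
      proof
        assume v: "v \<in> H2 n (Gh G f)"
        show "v \<in> ?U"
        proof (rule ccontr)
          assume nU: "v \<notin> ?U"
          then have "v \<notin> H2 n G" using U unfolding cl_def by auto
          then obtain y where y: "y \<in> ?W" "(y, v) \<in> G" using H2_eq[OF G(1)] vW unfolding WW_def by auto
          then have "(y, v) \<in> Gh G f" using nU unfolding Gh_def DD_def by auto
          then show False using v y(1) e by auto
        qed
      next
        assume v: "v \<in> ?U"
        have "(y, v) \<notin> Gh G f" if yW: "y \<in> ?W" for y
        proof
          assume "(y, v) \<in> Gh G f"
          then show False unfolding Gh_def
          proof
            assume yv: "(y, v) \<in> G - DD G"
            then have "y \<in> ?U" using U v yW unfolding cl_def by auto
            then show False using yv v unfolding DD_def by auto
          next
            assume "(y, v) \<in> ZZ G f"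
            then have "y \<in> ?S" using Zsub by auto
            then show False using yW WV by auto
          qed
        qed
        then show "v \<in> H2 n (Gh G f)" using e vW by auto
      qed
      then show ?thesis using e UW by blast
    qed
    have cardD: "u - m \<le> card (DD G)"
    proof -
      define par where "par x = (SOME y. y \<in> ?W \<and> (y, x) \<in> G)" for x
      have par: "(par x, x) \<in> DD G" if x: "x \<in> ?U - H2 n G" for x
      proof -
        have xW: "x \<in> ?W" using x UW by auto
        then have "\<exists>y. y \<in> ?W \<and> (y, x) \<in> G" using x H2_eq[OF G(1)] unfolding WW_def by auto
        then have py: "par x \<in> ?W \<and> (par x, x) \<in> G" unfolding par_def by (rule someI_ex)
        then have "par x \<in> ?U" using U x unfolding cl_def by auto
        then show ?thesis using py x unfolding DD_def by auto
      qed
      have inj: "inj_on (\<lambda>x. (par x, x)) (?U - H2 n G)" by (rule inj_onI) auto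
      have fD: "finite (DD G)" using G(3) unfolding DD_def by auto
      have "card (?U - H2 n G) \<le> card (DD G)"
        by (rule card_inj_on_le[OF inj _ fD]) (use par in auto)
      moreover have "card (?U - H2 n G) = u - h2 n G"
      proof -
        have fU: "finite ?U" using UW unfolding WW_def by (auto intro: finite_subset)
        have "H2 n G \<subseteq> ?U" using U unfolding cl_def by auto
        then show ?thesis using card_Diff_subset[OF finite_subset[OF _ fU]] U unfolding cl_def h2_def by auto
      qed
      moreover have "h2 n G \<le> m" using GA by simp
      ultimately show ?thesis by linarith
    qed
    have inB: "\<psi> (G, f) \<in> ?B"
    proof -
      have "U0 G \<subseteq> H2 n (Gh G f)" using H2h U0U by simp
      moreover have "DD G \<subseteq> H2 n (Gh G f) \<times> H2 n (Gh G f)" using H2h unfolding DD_def by auto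
      moreover have "card (H2 n (Gh G f)) = u" using H2h U unfolding cl_def by simp
      ultimately show ?thesis unfolding \<psi>_def using Ghd cardD by auto
    qed
    have fGD: "finite (G - DD G)" using G(3) by auto
    have fU0: "finite (U0 G)" using U0U UW WV finite_subset by (metis finite_atLeastAtMost subset_trans)
    have cZ: "card (ZZ G f) = card (U0 G)" unfolding ZZ_def by (rule card_image) (auto intro: inj_onI)
    have c1: "card (Gh G f) = card (G - DD G) + card (U0 G)"
    proof -
      have "(G - DD G) \<inter> ZZ G f = {}" using Z_disj Zsub by blast
      then show ?thesis unfolding Gh_def using card_Un_disjoint[OF fGD] fU0 cZ unfolding ZZ_def by auto
    qed
    have c2: "card G = card (G - DD G) + card (DD G)"
    proof -
      have "DD G \<subseteq> G" unfolding DD_def by auto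
      then show ?thesis using card_Diff_subset[OF finite_subset[OF _ G(3)]] card_mono[OF G(3)]
        by (metis le_add_diff_inverse2)
    qed
    have cU0: "card (U0 G) \<le> u"
    proof -
      have "finite ?U" using UW WV finite_subset by (metis finite_atLeastAtMost subset_trans)
      then show ?thesis using card_mono[OF _ U0U] U unfolding cl_def by auto
    qed
    have rec1: "G = (Gh G f - ?S \<times> U0 G) \<union> DD G"
    proof -
      have "Gh G f - ?S \<times> U0 G = G - DD G" unfolding Gh_def using Zsub Z_disj by blast
      then show ?thesis unfolding DD_def by auto
    qed
    have rec2: "\<forall>x\<in>U0 G. \<forall>s\<in>?S. (s, x) \<in> Gh G f \<longleftrightarrow> s = f x"
    proof (intro ballI iffI)
      fix x s assume x: "x \<in> U0 G" and s: "s \<in> ?S"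
      {
        assume "(s, x) \<in> Gh G f"
        then show "s = f x" unfolding Gh_def
        proof
          assume "(s, x) \<in> G - DD G" then show ?thesis using Z_disj x s by blast
        next
          assume "(s, x) \<in> ZZ G f" then show ?thesis unfolding ZZ_def by auto
        qed
      }
      assume "s = f x"
      then show "(s, x) \<in> Gh G f" using x unfolding Gh_def ZZ_def by auto
    qed
    show ?thesis using inB c1 c2 H1h cU0 rec1 rec2 by simp
  qed
  have inj: "inj_on \<psi> ?C"
  proof (rule inj_onI)
    fix a b assume a: "a \<in> ?C" and b: "b \<in> ?C" and e: "\<psi> a = \<psi> b"
    obtain G1 f1 where a': "a = (G1, f1)" by (cases a)
    obtain G2 f2 where b': "b = (G2, f2)" by (cases b)
    have G1: "G1 \<in> ?A" "f1 \<in> PiE (U0 G1) (\<lambda>_. H1 n G1)" using a a' by auto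
    have G2: "G2 \<in> ?A" "f2 \<in> PiE (U0 G2) (\<lambda>_. H1 n G2)" using b b' by auto
    have pe: "(Gh G1 f1, U0 G1, DD G1) = (Gh G2 f2, U0 G2, DD G2)" using e a' b' unfolding \<psi>_def by simp
    have e1: "Gh G1 f1 = Gh G2 f2" "U0 G1 = U0 G2" "DD G1 = DD G2"
      using arg_cong[OF pe, of fst] arg_cong[OF pe, of "fst o snd"] arg_cong[OF pe, of "snd o snd"] by simp_all
    note m1 = main[OF G1] and m2 = main[OF G2]
    have hh: "H1 n G1 = H1 n G2" using m1 m2 e1 by metis
    have GG: "G1 = G2"
    proof -
      have "G1 = (Gh G1 f1 - H1 n G1 \<times> U0 G1) \<union> DD G1" using m1 by blast
      also have "\<dots> = (Gh G2 f2 - H1 n G2 \<times> U0 G2) \<union> DD G2" using e1 hh by simp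
      also have "\<dots> = G2" using m2 by blast
      finally show ?thesis .
    qed
    have ff: "f1 = f2"
    proof (rule PiE_ext[OF G1(2)])
      show "f2 \<in> PiE (U0 G1) (\<lambda>_. H1 n G1)" using G2(2) GG by simp
      fix x assume x: "x \<in> U0 G1"
      have s1: "f1 x \<in> H1 n G1" using G1(2) x by auto
      have "(f1 x, x) \<in> Gh G1 f1" using m1 x s1 by blast
      then have "(f1 x, x) \<in> Gh G2 f2" using e1 by simp
      moreover have "x \<in> U0 G2" "f1 x \<in> H1 n G2" using x s1 GG by simp_all
      ultimately show "f1 x = f2 x" using m2 by blast
    qed
    show "a = b" using a' b' GG ff by simp
  qed
  let ?g = "\<lambda>(G'::(nat\<times>nat) set, U'::nat set, D::(nat\<times>nat) set). q ^ card G' * q ^ card D"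
  let ?bnd = "(exp 1 * real (u*u) * q / real (u - m)) ^ (u - m) * exp (real (u*u) * q)"
  let ?c = "min 1 (real k0 * q)"
  have finA: "finite ?A" using dags_finite by simp
  have finPi: "finite (PiE (U0 G) (\<lambda>_. H1 n G))" if GA: "G \<in> ?A" for G
  proof (rule finite_PiE)
    show "finite (U0 G)" using U0fin[OF GA] by blast
    show "finite (H1 n G)" unfolding H1_def sources_def by simp
  qed
  have finB: "finite ?B"
  proof (rule finite_SigmaI)
    show "finite {G' \<in> dags n. card (H2 n G') = u}" using dags_finite by simp
    fix G' show "finite (Pow (H2 n G') \<times> {D. D \<subseteq> H2 n G' \<times> H2 n G' \<and> u - m \<le> card D})"
      by (intro finite_cartesian_product finite_Pow_iff[THEN iffD2] finite_subset[of _ "Pow (H2 n G' \<times> H2 n G')"])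
         (auto simp: H2_def sources_def)
  qed
  have "(\<Sum>G\<in>?A. q ^ card G) * ?c ^ u = (\<Sum>G\<in>?A. q ^ card G * ?c ^ u)"
    by (simp add: sum_distrib_right)
  also have "\<dots> \<le> (\<Sum>G\<in>?A. q ^ card G * (real (card (H1 n G)) ^ card (U0 G) * q ^ card (U0 G)))"
  proof (rule sum_mono)
    fix G assume GA: "G \<in> ?A"
    have cu: "card (U0 G) \<le> u" using U0fin[OF GA] by blast
    have c0: "0 \<le> ?c" "?c \<le> 1" using q by auto
    have ck: "?c \<le> real (card (H1 n G)) * q"
    proof -
      have "real k0 \<le> real (card (H1 n G))" using GA unfolding h1_def by simp
      then have "real k0 * q \<le> real (card (H1 n G)) * q" using q by (rule mult_right_mono)
      then show ?thesis by linarith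
    qed
    have "?c ^ u \<le> ?c ^ card (U0 G)" by (rule power_decreasing[OF cu c0(1) c0(2)])
    also have "\<dots> \<le> (real (card (H1 n G)) * q) ^ card (U0 G)" by (rule power_mono[OF ck c0(1)])
    finally have "?c ^ u \<le> real (card (H1 n G)) ^ card (U0 G) * q ^ card (U0 G)"
      by (simp add: power_mult_distrib)
    then show "q ^ card G * ?c ^ u \<le> q ^ card G * (real (card (H1 n G)) ^ card (U0 G) * q ^ card (U0 G))"
      using q by (intro mult_left_mono) simp_all
  qed
  also have "\<dots> = (\<Sum>G\<in>?A. \<Sum>f\<in>PiE (U0 G) (\<lambda>_. H1 n G). q ^ card G * q ^ card (U0 G))"
  proof (rule sum.cong[OF refl])
    fix G assume GA: "G \<in> ?A"
    have "card (PiE (U0 G) (\<lambda>_. H1 n G)) = card (H1 n G) ^ card (U0 G)"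
      using U0fin[OF GA] by (simp add: card_PiE)
    then show "q ^ card G * (real (card (H1 n G)) ^ card (U0 G) * q ^ card (U0 G)) =
       (\<Sum>f\<in>PiE (U0 G) (\<lambda>_. H1 n G). q ^ card G * q ^ card (U0 G))" by simp
  qed
  also have "\<dots> = (\<Sum>Gf\<in>?C. q ^ card (fst Gf) * q ^ card (U0 (fst Gf)))"
    by (subst sum.Sigma) (use finA finPi in \<open>auto simp: split_beta\<close>)
  also have "\<dots> = (\<Sum>Gf\<in>?C. ?g (\<psi> Gf))"
  proof (rule sum.cong[OF refl])
    fix Gf assume "Gf \<in> ?C"
    then obtain G f where Gf: "Gf = (G, f)" "G \<in> ?A" "f \<in> PiE (U0 G) (\<lambda>_. H1 n G)" by auto
    have "card G + card (U0 G) = card (Gh G f) + card (DD G)" using main[OF Gf(2,3)] by blast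
    then show "q ^ card (fst Gf) * q ^ card (U0 (fst Gf)) = ?g (\<psi> Gf)"
      unfolding Gf(1) \<psi>_def by (simp add: power_add[symmetric])
  qed
  also have "\<dots> \<le> (\<Sum>y\<in>?B. ?g y)"
  proof (rule sum_inj_le[OF finB inj])
    show "\<psi> ` ?C \<subseteq> ?B"
    proof
      fix y assume "y \<in> \<psi> ` ?C"
      then obtain G f where "G \<in> ?A" "f \<in> PiE (U0 G) (\<lambda>_. H1 n G)" "y = \<psi> (G, f)" by auto
      then show "y \<in> ?B" using main by blast
    qed
    show "0 \<le> ?g y" for y using q by (cases y) auto
  qed
  also have "\<dots> = (\<Sum>G'\<in>{G'\<in>dags n. card (H2 n G') = u}. q ^ card G' *
                   (2 ^ u * (\<Sum>D\<in>{D. D \<subseteq> H2 n G' \<times> H2 n G' \<and> u - m \<le> card D}. q ^ card D)))"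
  proof -
    have fH2: "finite (H2 n G')" for G' unfolding H2_def sources_def by simp
    have fDs: "finite {D. D \<subseteq> H2 n G' \<times> H2 n G' \<and> u - m \<le> card D}" for G'
      by (rule finite_subset[of _ "Pow (H2 n G' \<times> H2 n G')"]) (auto simp: fH2)
    have "(\<Sum>y\<in>?B. ?g y) = (\<Sum>G'\<in>{G'\<in>dags n. card (H2 n G') = u}.
            \<Sum>UD\<in>Pow (H2 n G') \<times> {D. D \<subseteq> H2 n G' \<times> H2 n G' \<and> u - m \<le> card D}. ?g (G', UD))"
      by (subst sum.Sigma) (use dags_finite fH2 fDs in auto)
    also have "\<dots> = (\<Sum>G'\<in>{G'\<in>dags n. card (H2 n G') = u}. q ^ card G' *
                   (2 ^ u * (\<Sum>D\<in>{D. D \<subseteq> H2 n G' \<times> H2 n G' \<and> u - m \<le> card D}. q ^ card D)))"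
    proof (rule sum.cong[OF refl])
      fix G' assume G': "G' \<in> {G'\<in>dags n. card (H2 n G') = u}"
      have "(\<Sum>UD\<in>Pow (H2 n G') \<times> {D. D \<subseteq> H2 n G' \<times> H2 n G' \<and> u - m \<le> card D}. ?g (G', UD))
          = (\<Sum>U'\<in>Pow (H2 n G'). \<Sum>D\<in>{D. D \<subseteq> H2 n G' \<times> H2 n G' \<and> u - m \<le> card D}. q ^ card G' * q ^ card D)"
      proof -
        have "(\<Sum>UD\<in>Pow (H2 n G') \<times> {D. D \<subseteq> H2 n G' \<times> H2 n G' \<and> u - m \<le> card D}. ?g (G', UD))
           = (\<Sum>UD\<in>Pow (H2 n G') \<times> {D. D \<subseteq> H2 n G' \<times> H2 n G' \<and> u - m \<le> card D}. (\<lambda>(U'::nat set, D). q ^ card G' * q ^ card D) UD)"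
          by (rule sum.cong[OF refl]) (simp add: split_beta)
        also have "\<dots> = (\<Sum>U'\<in>Pow (H2 n G'). \<Sum>D\<in>{D. D \<subseteq> H2 n G' \<times> H2 n G' \<and> u - m \<le> card D}. q ^ card G' * q ^ card D)"
          by (rule sum.cartesian_product[symmetric])
        finally show ?thesis .
      qed
      also have "\<dots> = real (card (Pow (H2 n G'))) * (q ^ card G' * (\<Sum>D\<in>{D. D \<subseteq> H2 n G' \<times> H2 n G' \<and> u - m \<le> card D}. q ^ card D))"
        by (simp add: sum_distrib_left)
      also have "\<dots> = q ^ card G' * (2 ^ u * (\<Sum>D\<in>{D. D \<subseteq> H2 n G' \<times> H2 n G' \<and> u - m \<le> card D}. q ^ card D))"
        using G' fH2[of G'] by (simp add: card_Pow)
      finally show "(\<Sum>UD\<in>Pow (H2 n G') \<times> {D. D \<subseteq> H2 n G' \<times> H2 n G' \<and> u - m \<le> card D}. ?g (G', UD)) =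
          q ^ card G' * (2 ^ u * (\<Sum>D\<in>{D. D \<subseteq> H2 n G' \<times> H2 n G' \<and> u - m \<le> card D}. q ^ card D))" .
    qed
    finally show ?thesis .
  qed
  also have "\<dots> \<le> (\<Sum>G'\<in>{G'\<in>dags n. card (H2 n G') = u}. q ^ card G' * (2 ^ u * ?bnd))"
  proof (rule sum_mono)
    fix G' assume G': "G' \<in> {G'\<in>dags n. card (H2 n G') = u}"
    have fH: "finite (H2 n G' \<times> H2 n G')" unfolding H2_def sources_def by auto
    have cH: "card (H2 n G' \<times> H2 n G') = u * u" using G' by (simp add: card_cartesian_product)
    have "(\<Sum>D\<in>{D. D \<subseteq> H2 n G' \<times> H2 n G' \<and> u - m \<le> card D}. q ^ card D) \<le> ?bnd"
      using tail_bound2[OF fH q, of "u - m"] mu cH by simp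
    then show "q ^ card G' * (2 ^ u * (\<Sum>D\<in>{D. D \<subseteq> H2 n G' \<times> H2 n G' \<and> u - m \<le> card D}. q ^ card D))
        \<le> q ^ card G' * (2 ^ u * ?bnd)"
      using q by (intro mult_left_mono) simp_all
  qed
  also have "\<dots> = (\<Sum>G'\<in>{G'\<in>dags n. card (H2 n G') = u}. q ^ card G') * (2 ^ u * ?bnd)"
    by (simp add: sum_distrib_right)
  also have "\<dots> \<le> (\<Sum>G\<in>dags n. q ^ card G) * (2 ^ u * ?bnd)"
  proof (rule mult_right_mono)
    show "(\<Sum>G'\<in>{G'\<in>dags n. card (H2 n G') = u}. q ^ card G') \<le> (\<Sum>G\<in>dags n. q ^ card G)"
      by (rule sum_mono2[OF dags_finite]) (use q in auto)
    show "0 \<le> 2 ^ u * ?bnd" using q by simp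
  qed
  finally show ?thesis .
qed


lemma A3_bound:
  fixes q :: real
  assumes q: "0 \<le> q" and n: "1 \<le> n" and u: "0 < u"
  shows "(\<Sum>G\<in>{G\<in>dags n. n < h1 n G + u}. q ^ card G) \<le> real u * real n ^ u * (1 + q) ^ (n * u)"
proof -
  let ?V = "{1..n::nat}"
  let ?A = "{G\<in>dags n. n < h1 n G + u}"
  let ?T = "{T. T \<subseteq> ?V \<and> card T < u}"
  let ?B = "Sigma ?T (\<lambda>T. Pow (?V \<times> T))"
  define \<phi> where "\<phi> G = (?V - H1 n G, G)" for G
  have img: "\<phi> ` ?A \<subseteq> ?B"
  proof
    fix y assume "y \<in> \<phi> ` ?A"
    then obtain G where GA: "G \<in> ?A" and y: "y = \<phi> G" by blast
    have G: "G \<subseteq> ?V \<times> ?V" using dagsD GA by auto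
    have c: "card (?V - H1 n G) = n - h1 n G" unfolding h1_def
      by (subst card_Diff_subset) (auto simp: H1_def sources_def)
    have "G \<subseteq> ?V \<times> (?V - H1 n G)" using G H1_eq[OF G] by auto
    moreover have "n - h1 n G < u"
    proof -
      have "n < h1 n G + u" using GA by blast
      then show ?thesis using u by linarith
    qed
    ultimately show "y \<in> ?B" unfolding y \<phi>_def using c by auto
  qed
  have inj: "inj_on \<phi> ?A" unfolding \<phi>_def by (rule inj_onI) simp
  have finT: "finite T" if "T \<in> ?T" for T
  proof -
    have "T \<subseteq> ?V" using that by blast
    then show ?thesis by (rule finite_subset[OF _ finite_atLeastAtMost])
  qed
  have finTT: "finite ?T"
  proof (rule finite_subset[of _ "Pow ?V"])
    show "?T \<subseteq> Pow ?V" by blast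
  qed simp
  have finB: "finite ?B"
  proof (rule finite_SigmaI[OF finTT])
    fix T assume "T \<in> ?T"
    then have "finite T" by (rule finT)
    then show "finite (Pow (?V \<times> T))" by blast
  qed
  have "(\<Sum>G\<in>?A. q ^ card G) = (\<Sum>G\<in>?A. (\<lambda>(T::nat set, E::(nat\<times>nat) set). q ^ card E) (\<phi> G))"
    unfolding \<phi>_def by simp
  also have "\<dots> \<le> (\<Sum>y\<in>?B. (\<lambda>(T::nat set, E::(nat\<times>nat) set). q ^ card E) y)"
    by (rule sum_inj_le[OF finB inj img]) (use q in \<open>auto simp: split_beta\<close>)
  also have "\<dots> = (\<Sum>T\<in>?T. \<Sum>E\<in>Pow (?V \<times> T). q ^ card E)"
    by (subst sum.Sigma) (use finT in \<open>auto simp: split_beta\<close>)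
  also have "\<dots> = (\<Sum>T\<in>?T. (1 + q) ^ (n * card T))"
  proof (rule sum.cong[OF refl])
    fix T assume "T \<in> ?T"
    then have "finite (?V \<times> T)" by (auto intro: finite_subset)
    moreover have "card (?V \<times> T) = n * card T" by (simp add: card_cartesian_product)
    ultimately show "(\<Sum>E\<in>Pow (?V \<times> T). q ^ card E) = (1 + q) ^ (n * card T)"
      using sum_pow_card by metis
  qed
  also have "\<dots> \<le> (\<Sum>T\<in>?T. (1 + q) ^ (n * u))"
  proof (rule sum_mono)
    fix T assume "T \<in> ?T"
    then have "n * card T \<le> n * u" by simp
    then show "(1 + q) ^ (n * card T) \<le> (1 + q) ^ (n * u)" using q by (intro power_increasing) auto
  qed
  also have "\<dots> = real (card ?T) * (1 + q) ^ (n * u)" by simp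
  also have "\<dots> \<le> real u * real n ^ u * (1 + q) ^ (n * u)"
  proof (rule mult_right_mono)
    have "?T = (\<Union>s\<in>{..<u}. {T. T \<subseteq> ?V \<and> card T = s})" by auto
    then have "card ?T \<le> (\<Sum>s\<in>{..<u}. card {T. T \<subseteq> ?V \<and> card T = s})"
      using card_UN_le[of "{..<u}" "\<lambda>s. {T. T \<subseteq> ?V \<and> card T = s}"] by simp
    also have "\<dots> = (\<Sum>s\<in>{..<u}. n choose s)" using n_subsets[of ?V] by simp
    also have "\<dots> \<le> (\<Sum>s\<in>{..<u}. n ^ u)"
    proof (rule sum_mono)
      fix s assume s: "s \<in> {..<u}"
      have "n choose s \<le> n ^ s"
      proof (cases "s \<le> n")
        case True then show ?thesis by (rule binomial_le_pow)
      next
        case False then have "n choose s = 0" by (simp add: binomial_eq_0_iff)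
        then show ?thesis by (simp del: binomial_eq_0_iff)
      qed
      also have "\<dots> \<le> n ^ u" using s n by (intro power_increasing) auto
      finally show "n choose s \<le> n ^ u" .
    qed
    also have "\<dots> = u * n ^ u" by simp
    finally have "card ?T \<le> u * n ^ u" .
    then have "real (card ?T) \<le> real (u * n ^ u)" by (rule of_nat_mono)
    then show "real (card ?T) \<le> real u * real n ^ u" by simp
    show "0 \<le> (1 + q) ^ (n * u)" using q by simp
  qed
  finally show ?thesis .
qed

lemma Z_lower:
  fixes q :: real
  assumes q: "0 \<le> q"
  shows "(1 + q) ^ ((n div 2) * (n - n div 2)) \<le> (\<Sum>G\<in>dags n. q ^ card G)"
proof -
  let ?a = "n div 2"
  let ?X = "{1..?a} \<times> {?a+1..n}"
  have tr: "(x, y) \<in> ?X\<^sup>+ \<Longrightarrow> (x, y) \<in> ?X" for x y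
  proof (induction rule: trancl_induct)
    case (base y) then show ?case .
  next
    case (step y z) then show ?case by auto
  qed
  have acX: "acyclic ?X" unfolding acyclic_def
  proof (intro allI notI)
    fix x assume "(x, x) \<in> ?X\<^sup>+"
    then have "(x, x) \<in> ?X" by (rule tr)
    then have "x \<le> ?a" "?a + 1 \<le> x" by auto
    then show False by linarith
  qed
  have sub: "Pow ?X \<subseteq> dags n"
  proof
    fix E assume "E \<in> Pow ?X"
    then have E: "E \<subseteq> ?X" by simp
    have "?X \<subseteq> {1..n} \<times> {1..n}" by auto
    moreover have "acyclic E" using acyclic_subset[OF acX E] .
    ultimately show "E \<in> dags n" unfolding dags_def using E by blast
  qed
  have "(1 + q) ^ (?a * (n - ?a)) = (\<Sum>E\<in>Pow ?X. q ^ card E)"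
    using sum_pow_card[of ?X q] by (simp add: card_cartesian_product)
  also have "\<dots> \<le> (\<Sum>G\<in>dags n. q ^ card G)"
    by (rule sum_mono2[OF dags_finite sub]) (use q in auto)
  finally show ?thesis .
qed


definition Y1f :: "real \<Rightarrow> real" where "Y1f X = (X/(20*ln X)+1)/(X-1)"
definition Y2f :: "real \<Rightarrow> real" where "Y2f X = (X/(ln X)^2+1)/(X-1)"
definition g1f :: "real \<Rightarrow> real" where "g1f X = 4*exp 1*Y1f X*exp(4*Y1f X)"
definition g2f :: "real \<Rightarrow> real" where "g2f X = 16*(20*ln X)^4*((16*exp 1/3)*Y2f X)^3*exp(16*Y2f X)"

lemma part1:
  fixes q X L M1 :: real and n :: nat
  assumes q: "q = 1/(X-1)" and X1: "1 < X" and L: "L = ln X" and L1: "1 \<le> L"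
    and M1: "M1 = X/(20*L)" and M1ge: "1 \<le> M1" and Xn: "X \<le> real n / 6" and n2: "2 \<le> n"
    and g1le: "g1f X \<le> 1"
  shows "(\<Sum>G\<in>{G\<in>dags n. h1 n G \<le> nat \<lfloor>M1\<rfloor>}. q ^ card G) \<le> (\<Sum>G\<in>dags n. q ^ card G) * g1f X"
proof -
  define m where "m = nat \<lfloor>M1\<rfloor>"
  define u where "u = 2 * m + 1"
  have q0: "0 < q" using q X1 by simp
  have mM: "real m \<le> M1" "M1 < real m + 1" unfolding m_def using M1ge by linarith+
  have un: "u \<le> n"
  proof -
    have "X / L \<le> X" using L1 X1 by (simp add: divide_le_eq mult_le_cancel_left1 mult.commute)
    then have "M1 \<le> X / 20" unfolding M1 by simp
    then have "real u \<le> real n / 60 + 1" using mM Xn unfolding u_def by simp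
    then show ?thesis using n2 by simp
  qed
  have mu: "m < u" unfolding u_def by simp
  have um: "u - m = m + 1" unfolding u_def by simp
  have A: "(\<Sum>G\<in>{G\<in>dags n. h1 n G \<le> m}. q ^ card G) \<le> (\<Sum>G\<in>dags n. q ^ card G) *
        ((exp 1 * real (u*u) * q / real (u - m)) ^ (u - m) * exp (real (u*u) * q))"
    by (rule A1_bound[OF _ mu un]) (use q0 in simp)
  define r where "r = real (m + 1)"
  define y where "y = r * q"
  have r1: "1 \<le> r" unfolding r_def by simp
  have ur: "real (u*u) \<le> 4 * r^2" unfolding r_def u_def by (simp add: power2_eq_square algebra_simps)
  have y0: "0 \<le> y" unfolding y_def using q0 r1 by simp
  have yY: "y \<le> Y1f X"
  proof -
    have "r \<le> M1 + 1" unfolding r_def using mM by simp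
    then have "r * q \<le> (M1 + 1) * q" using q0 by (intro mult_right_mono) auto
    also have "\<dots> = Y1f X" unfolding Y1f_def q M1 L by simp
    finally show ?thesis unfolding y_def .
  qed
  have b1: "exp 1 * real (u*u) * q / real (u - m) \<le> 4 * exp 1 * y"
  proof -
    have "exp 1 * real (u*u) * q \<le> exp 1 * (4 * r^2) * q" using ur q0 by (intro mult_right_mono mult_left_mono) auto
    then have "exp 1 * real (u*u) * q / r \<le> exp 1 * (4 * r^2) * q / r" using r1 by (intro divide_right_mono) auto
    also have "\<dots> = 4 * exp 1 * y" unfolding y_def using r1 by (simp add: power2_eq_square field_simps)
    finally show ?thesis using um unfolding r_def by simp
  qed
  have b2: "exp (real (u*u) * q) \<le> exp (4 * y) ^ (m + 1)"
  proof -
    have "real (u*u) * q \<le> 4 * r^2 * q" using ur q0 by (intro mult_right_mono) auto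
    also have "\<dots> = real (m+1) * (4 * y)" unfolding y_def r_def by (simp add: power2_eq_square algebra_simps)
    finally have "exp (real (u*u) * q) \<le> exp (real (m+1) * (4 * y))" by simp
    also have "\<dots> = exp (4 * y) ^ (m + 1)" by (rule exp_of_nat_mult)
    finally show ?thesis .
  qed
  have "(exp 1 * real (u*u) * q / real (u - m)) ^ (u - m) * exp (real (u*u) * q)
        \<le> (4 * exp 1 * y) ^ (m + 1) * exp (4 * y) ^ (m + 1)"
  proof (rule mult_mono)
    show "(exp 1 * real (u*u) * q / real (u - m)) ^ (u - m) \<le> (4 * exp 1 * y) ^ (m + 1)"
      unfolding um by (rule power_mono[OF b1[unfolded um]]) (use q0 in simp)
  qed (use b2 y0 in auto)
  also have "\<dots> = (4 * exp 1 * y * exp (4 * y)) ^ (m + 1)" by (simp add: power_mult_distrib)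
  also have "\<dots> \<le> g1f X ^ (m + 1)"
  proof (rule power_mono)
    show "4 * exp 1 * y * exp (4 * y) \<le> g1f X" unfolding g1f_def
      using yY y0 by (intro mult_mono) auto
  qed (use y0 in simp)
  also have "\<dots> \<le> g1f X"
  proof -
    have "0 \<le> g1f X" unfolding g1f_def using y0 yY by simp
    then show ?thesis using power_decreasing[of 1 "m+1" "g1f X"] g1le by simp
  qed
  finally have B: "(exp 1 * real (u*u) * q / real (u - m)) ^ (u - m) * exp (real (u*u) * q) \<le> g1f X" .
  have Z0: "0 \<le> (\<Sum>G\<in>dags n. q ^ card G)" using q0 by (simp add: sum_nonneg)
  show ?thesis using A mult_left_mono[OF B Z0] unfolding m_def by linarith
qed


lemma part2:
  fixes q X L M1 M2 :: real and n :: nat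
  assumes q: "q = 1/(X-1)" and X1: "1 < X" and L: "L = ln X" and L1: "1 \<le> L"
    and M1: "M1 = X/(20*L)" and M1ge: "1 \<le> M1" and M2: "M2 = X/L^2" and M2ge: "1 \<le> M2"
    and t2le: "(16*exp 1/3) * Y2f X \<le> 1" and g2le: "g2f X \<le> 1"
  shows "(\<Sum>G\<in>{G\<in>dags n. nat \<lceil>M1\<rceil> \<le> h1 n G \<and> h1 n G + 4 * (nat \<lfloor>M2\<rfloor> + 1) \<le> n \<and> h2 n G \<le> nat \<lfloor>M2\<rfloor>}. q ^ card G)
     \<le> (\<Sum>G\<in>dags n. q ^ card G) * g2f X"
proof -
  define k0 where "k0 = nat \<lceil>M1\<rceil>"
  define m where "m = nat \<lfloor>M2\<rfloor>"
  define s where "s = m + 1"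
  define u where "u = 4 * s"
  define Z where "Z = (\<Sum>G\<in>dags n. q ^ card G)"
  define S where "S = (\<Sum>G\<in>{G\<in>dags n. k0 \<le> h1 n G \<and> h1 n G + u \<le> n \<and> h2 n G \<le> m}. q ^ card G)"
  define B where "B = (exp 1 * real (u*u) * q / real (u - m)) ^ (u - m) * exp (real (u*u) * q)"
  define c where "c = min 1 (real k0 * q)"
  have q0: "0 < q" using q X1 by simp
  have Z0: "0 \<le> Z" unfolding Z_def using q0 by (simp add: sum_nonneg)
  have k0: "0 < k0" unfolding k0_def using M1ge by simp
  have kM: "M1 \<le> real k0" unfolding k0_def by linarith
  have mM: "real m \<le> M2" unfolding m_def using M2ge by linarith
  have mu: "m < u" unfolding u_def s_def by simp
  have um: "u - m = 3 * s + 1" unfolding u_def s_def by simp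
  have A: "S * c ^ u \<le> Z * (2 ^ u * B)"
    unfolding S_def Z_def B_def c_def by (rule A2_bound[OF _ mu k0]) (use q0 in simp)
  define c0 where "c0 = 1 / (20 * L)"
  have c00: "0 < c0" unfolding c0_def using L1 by simp
  have cc0: "c0 \<le> c"
  proof -
    have "c0 \<le> 1" unfolding c0_def using L1 by simp
    moreover have "c0 \<le> real k0 * q"
    proof -
      have "c0 \<le> M1 * q" unfolding c0_def M1 q using X1 L1 by (simp add: field_simps)
      also have "\<dots> \<le> real k0 * q" using kM q0 by (intro mult_right_mono) auto
      finally show ?thesis .
    qed
    ultimately show ?thesis unfolding c_def by simp
  qed
  have cu: "c0 ^ u \<le> c ^ u" using cc0 c00 by (intro power_mono) auto
  have cu0: "0 < c0 ^ u" using c00 by simp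
  have S0: "0 \<le> S" unfolding S_def using q0 by (simp add: sum_nonneg)
  have SB: "S \<le> Z * (2 ^ u * B) / c0 ^ u"
  proof -
    have "S * c0 ^ u \<le> S * c ^ u" using cu S0 by (rule mult_left_mono)
    also have "\<dots> \<le> Z * (2 ^ u * B)" by (rule A)
    finally show ?thesis using cu0 by (simp add: pos_le_divide_eq)
  qed
  define y where "y = real s * q"
  define t where "t = 16 * exp 1 / 3 * y"
  have s1: "1 \<le> real s" unfolding s_def by simp
  have y0: "0 \<le> y" unfolding y_def using q0 by simp
  have t0: "0 \<le> t" unfolding t_def using y0 by simp
  have yY: "y \<le> Y2f X"
  proof -
    have "real s \<le> M2 + 1" unfolding s_def using mM by simp
    then have "real s * q \<le> (M2 + 1) * q" using q0 by (intro mult_right_mono) auto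
    also have "\<dots> = Y2f X" unfolding Y2f_def q M2 L by simp
    finally show ?thesis unfolding y_def .
  qed
  have tY: "t \<le> 16 * exp 1 / 3 * Y2f X" unfolding t_def using yY by simp
  have t1: "t \<le> 1" using tY t2le by simp
  have base1: "exp 1 * real (u*u) * q / real (u - m) \<le> t"
  proof -
    have e1: "real (u*u) = 16 * real s * real s" unfolding u_def by simp
    have e2: "real (u - m) = 3 * real s + 1" unfolding um by simp
    have "exp 1 * (16 * real s * real s) * q / (3 * real s + 1) \<le> exp 1 * (16 * real s * real s) * q / (3 * real s)"
      using s1 q0 by (intro divide_left_mono) auto
    also have "\<dots> = t" unfolding t_def y_def using s1 by (simp add: field_simps)
    finally show ?thesis unfolding e1 e2 .
  qed
  have base0: "0 \<le> exp 1 * real (u*u) * q / real (u - m)" using q0 by simp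
  have B1: "(exp 1 * real (u*u) * q / real (u - m)) ^ (u - m) \<le> (t ^ 3) ^ s"
  proof -
    have "(exp 1 * real (u*u) * q / real (u - m)) ^ (u - m) \<le> t ^ (u - m)"
      by (rule power_mono[OF base1 base0])
    also have "\<dots> \<le> t ^ (3 * s)" unfolding um using t0 t1 by (intro power_decreasing) auto
    also have "\<dots> = (t ^ 3) ^ s" by (simp add: power_mult)
    finally show ?thesis .
  qed
  have B2: "exp (real (u*u) * q) = exp (16 * y) ^ s"
  proof -
    have "real (u*u) * q = real s * (16 * y)" unfolding u_def y_def by (simp add: algebra_simps)
    then show ?thesis by (simp add: exp_of_nat_mult)
  qed
  have BB: "B \<le> (t ^ 3) ^ s * exp (16 * y) ^ s"
    unfolding B_def B2 using B1 by (intro mult_right_mono) auto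
  have pw: "2 ^ u / c0 ^ u = (16 * (20 * L) ^ 4) ^ s"
  proof -
    have "2 ^ u / c0 ^ u = (2 / c0) ^ u" by (simp add: power_divide)
    also have "2 / c0 = 40 * L" unfolding c0_def using L1 by simp
    also have "(40 * L) ^ u = ((40 * L) ^ 4) ^ s" unfolding u_def by (simp add: power_mult)
    also have "(40 * L) ^ 4 = 16 * (20 * L) ^ 4" by (simp add: power_mult_distrib)
    finally show ?thesis .
  qed
  have "Z * (2 ^ u * B) / c0 ^ u = Z * (2 ^ u / c0 ^ u * B)" by simp
  also have "\<dots> \<le> Z * ((16 * (20 * L) ^ 4) ^ s * ((t ^ 3) ^ s * exp (16 * y) ^ s))"
    unfolding pw using BB Z0 L1 by (intro mult_left_mono) auto
  also have "\<dots> = Z * (16 * (20 * L) ^ 4 * t ^ 3 * exp (16 * y)) ^ s"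
    by (simp add: power_mult_distrib)
  also have "\<dots> \<le> Z * g2f X ^ s"
  proof (rule mult_left_mono[OF _ Z0], rule power_mono)
    show "16 * (20 * L) ^ 4 * t ^ 3 * exp (16 * y) \<le> g2f X"
    proof -
      have Y20: "0 \<le> Y2f X" using yY y0 by simp
      show ?thesis unfolding g2f_def L[symmetric] using tY yY t0 L1 Y20
        by (intro mult_mono power_mono) auto
    qed
  qed (use t0 L1 in simp)
  also have "\<dots> \<le> Z * g2f X"
  proof (rule mult_left_mono[OF _ Z0])
    have Y20: "0 \<le> Y2f X" using yY y0 by simp
    have "0 \<le> g2f X" unfolding g2f_def L[symmetric] using Y20 L1 by simp
    then show "g2f X ^ s \<le> g2f X" using power_decreasing[of 1 s "g2f X"] g2le s1 by simp
  qed
  finally have "S \<le> Z * g2f X" using SB by linarith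
  then show ?thesis unfolding S_def Z_def k0_def m_def u_def s_def .
qed


lemma half_prod: "(n::nat)^2 \<le> 4 * ((n div 2) * (n - n div 2)) + 1"
proof -
  have "n = 2 * (n div 2) \<or> n = 2 * (n div 2) + 1" by presburger
  then show ?thesis
  proof
    assume h: "n = 2 * (n div 2)"
    define a where "a = n div 2"
    have "n = 2 * a" using h unfolding a_def .
    then show ?thesis unfolding a_def[symmetric] by (simp add: power2_eq_square algebra_simps)
  next
    assume h: "n = 2 * (n div 2) + 1"
    define a where "a = n div 2"
    have "n = 2 * a + 1" using h unfolding a_def .
    then show ?thesis unfolding a_def[symmetric] by (simp add: power2_eq_square algebra_simps)
  qed
qed

lemma part3:
  fixes p q X L M2 :: real and n :: nat
  assumes p0: "0 < p" "p < 1" and q: "q = p / (1 - p)" and X: "X = 1 / p" and pn: "6 \<le> p * real n"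
    and n2: "2 \<le> n" and L: "L = ln X" and L3: "3 \<le> L" and M2: "M2 = X / L^2" and M2ge: "6 \<le> M2"
    and E3: "80 * ln (real n) \<le> p^2 * (real n)^2 * L^2"
  shows "(\<Sum>G\<in>{G\<in>dags n. n < h1 n G + 4 * (nat \<lfloor>M2\<rfloor> + 1)}. q ^ card G) \<le> (\<Sum>G\<in>dags n. q ^ card G) / real n"
proof -
  define m where "m = nat \<lfloor>M2\<rfloor>"
  define u where "u = 4 * (m + 1)"
  define a where "a = n div 2"
  define Z where "Z = (\<Sum>G\<in>dags n. q ^ card G)"
  have q0: "0 < q" using q p0 by simp
  have q1: "1 + q = 1 / (1 - p)" using q p0 by (simp add: field_simps)
  have n0: "0 < real n" using n2 by simp
  have mM: "real m \<le> M2" unfolding m_def using M2ge by linarith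
  have uM: "real u + 2 \<le> 5 * M2" unfolding u_def using mM M2ge by simp
  have Xn: "X \<le> real n / 6" unfolding X using pn p0 by (simp add: field_simps)
  have L9: "9 \<le> L^2"
  proof -
    have "3 * 3 \<le> L * L" using L3 by (intro mult_mono) auto
    then show ?thesis by (simp add: power2_eq_square)
  qed
  have un8: "real u \<le> real n / 8"
  proof -
    have X0: "0 \<le> X" unfolding X using p0 by simp
    have "M2 \<le> X / 9" unfolding M2 using L9 X0 by (intro divide_left_mono) auto
    then have "5 * M2 \<le> 5 * real n / 54" using Xn by simp
    then show ?thesis using uM n0 by simp
  qed
  have u0: "0 < u" unfolding u_def by simp
  have A: "(\<Sum>G\<in>{G\<in>dags n. n < h1 n G + u}. q ^ card G) \<le> real u * real n ^ u * (1 + q) ^ (n * u)"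
    by (rule A3_bound[OF _ _ u0]) (use q0 n2 in simp_all)
  have Zl: "(1 + q) ^ (a * (n - a)) \<le> Z" unfolding Z_def a_def by (rule Z_lower) (use q0 in simp)
  have hp: "real n ^ 2 \<le> 4 * real (a * (n - a)) + 1"
  proof -
    have "real (n^2) \<le> real (4 * ((n div 2) * (n - n div 2)) + 1)" using half_prod[of n] by (rule of_nat_mono)
    then show ?thesis unfolding a_def by simp
  qed
  define P where "P = real (a * (n - a))"
  define N2 where "N2 = real n ^ 2"
  have hp': "N2 \<le> 4 * P + 1" using hp unfolding P_def N2_def .
  have N4: "4 \<le> N2" unfolding N2_def using n2
  proof -
    have "2 * 2 \<le> real n * real n" using n2 by (intro mult_mono) auto
    then show "4 \<le> real n ^ 2" by (simp add: power2_eq_square)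
  qed
  have nn8: "real n * (real n / 8) = N2 / 8" unfolding N2_def by (simp add: power2_eq_square)
  have nu: "n * u \<le> a * (n - a)"
  proof -
    have "real (n * u) \<le> real n * (real n / 8)" using un8 n0 by (simp add: mult_left_mono)
    also have "\<dots> \<le> real (a * (n - a))" unfolding nn8 P_def[symmetric] using hp' N4 by linarith
    finally show ?thesis by (simp only: of_nat_le_iff)
  qed
  define K where "K = a * (n - a) - n * u"
  have Kd: "a * (n - a) = K + n * u" unfolding K_def using nu by simp
  have Kr: "real n ^ 2 / 16 \<le> real K"
  proof -
    have "real K = real (a * (n - a)) - real (n * u)" unfolding K_def using nu by (simp add: of_nat_diff)
    moreover have "real (n * u) \<le> real n * (real n / 8)" using un8 n0 by (simp add: mult_left_mono)
    ultimately show ?thesis unfolding nn8 P_def[symmetric] N2_def[symmetric] using hp' N4 by linarith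
  qed
  have ex: "exp (p * real K) \<le> (1 + q) ^ K"
  proof -
    have "exp p \<le> 1 + q"
    proof -
      have "exp (- p) \<ge> 1 + (- p)" by (rule exp_ge_add_one_self)
      then have "1 - p \<le> exp (- p)" by simp
      then have "1 / exp (- p) \<le> 1 / (1 - p)" using p0 by (intro divide_left_mono) auto
      then show ?thesis unfolding q1 by (simp add: exp_minus field_simps)
    qed
    then have "exp p ^ K \<le> (1 + q) ^ K" by (intro power_mono) auto
    then show ?thesis by (simp add: exp_of_nat_mult[symmetric] mult.commute)
  qed
  have key: "real u * real n ^ u * real n \<le> exp (p * real K)"
  proof -
    have "real u * real n ^ u * real n \<le> real n * real n ^ u * real n"
      using un8 n0 by (intro mult_right_mono) auto
    also have "\<dots> = real n ^ (u + 2)" by (simp add: power_add power2_eq_square)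
    also have "\<dots> = exp (ln (real n)) ^ (u + 2)" using n0 by simp
    also have "\<dots> = exp (real (u + 2) * ln (real n))" by (rule exp_of_nat_mult[symmetric])
    also have "\<dots> \<le> exp (p * real K)"
    proof -
      have l0: "0 \<le> ln (real n)" using n2 by simp
      have "real (u + 2) * ln (real n) \<le> 5 * M2 * ln (real n)" using uM l0 by (intro mult_right_mono) auto
      also have "\<dots> = 5 * ln (real n) / (p * L^2)" unfolding M2 X by simp
      also have "\<dots> \<le> p * (real n ^ 2 / 16)"
      proof -
        have pL: "0 < p * L^2" using p0 L3 by simp
        have "5 * ln (real n) \<le> p * (real n ^ 2 / 16) * (p * L^2)" using E3 by (simp add: power2_eq_square algebra_simps)
        then show ?thesis using pL by (simp add: pos_divide_le_eq)
      qed
      also have "\<dots> \<le> p * real K" using Kr p0 by (intro mult_left_mono) auto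
      finally show ?thesis by simp
    qed
    finally show ?thesis .
  qed
  have "(\<Sum>G\<in>{G\<in>dags n. n < h1 n G + u}. q ^ card G) \<le> real u * real n ^ u * (1 + q) ^ (n * u)" by (rule A)
  also have "\<dots> \<le> Z / real n"
  proof -
    have pos: "0 < (1 + q) ^ (n * u)" using q0 by simp
    have "real u * real n ^ u * (1 + q) ^ (n * u) * real n = (real u * real n ^ u * real n) * (1 + q) ^ (n * u)"
      by simp
    also have "\<dots> \<le> exp (p * real K) * (1 + q) ^ (n * u)" using key pos by (intro mult_right_mono) auto
    also have "\<dots> \<le> (1 + q) ^ K * (1 + q) ^ (n * u)" using ex pos by (intro mult_right_mono) auto
    also have "\<dots> = (1 + q) ^ (a * (n - a))" unfolding Kd by (simp add: power_add)
    also have "\<dots> \<le> Z" by (rule Zl)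
    finally show ?thesis using n0 by (simp add: pos_le_divide_eq)
  qed
  finally show ?thesis unfolding Z_def u_def m_def .
qed


lemma sum_Un_le_nn:
  fixes f :: "'a \<Rightarrow> real"
  assumes "finite A" "finite B" "\<And>x. x \<in> A \<union> B \<Longrightarrow> 0 \<le> f x"
  shows "sum f (A \<union> B) \<le> sum f A + sum f B"
proof -
  have "0 \<le> sum f (A \<inter> B)" using assms(3) by (intro sum_nonneg) auto
  then show ?thesis using sum_Un[OF assms(1,2), of f] by linarith
qed

lemma per_n:
  fixes p :: real and n :: nat
  assumes p0: "0 < p" "p < 1" and pn: "6 \<le> p * real n" and n2: "2 \<le> n"
    and L3: "3 \<le> ln (1/p)" and M1ge: "1 \<le> (1/p)/(20*ln(1/p))" and M2ge: "6 \<le> (1/p)/(ln(1/p))^2"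
    and g1le: "g1f (1/p) \<le> 1" and t2le: "(16*exp 1/3) * Y2f (1/p) \<le> 1" and g2le: "g2f (1/p) \<le> 1"
    and E3: "80 * ln (real n) \<le> p^2 * (real n)^2 * (ln (1/p))^2"
  shows "1 - dag_prob n p (\<lambda>E. real (h1 n E) \<ge> (1 / p) / (20 * ln (1 / p)) \<and>
            real (h2 n E) \<ge> (1 / p) / (ln (1 / p))^2) \<le> g1f (1/p) + g2f (1/p) + 1 / real n"
proof -
  define X where "X = 1 / p"
  define L where "L = ln X"
  define M1 where "M1 = X / (20 * L)"
  define M2 where "M2 = X / L^2"
  define q where "q = p / (1 - p)"
  define P where "P E \<longleftrightarrow> real (h1 n E) \<ge> (1 / p) / (20 * ln (1 / p)) \<and> real (h2 n E) \<ge> (1 / p) / (ln (1 / p))^2" for E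
  define Z where "Z = (\<Sum>G\<in>dags n. q ^ card G)"
  have X1: "1 < X" unfolding X_def using p0 by simp
  have qX: "q = 1 / (X - 1)" unfolding q_def X_def using p0 by (simp add: field_simps)
  have q0: "0 < q" unfolding q_def using p0 by simp
  have L3': "3 \<le> L" unfolding L_def X_def using L3 .
  have M1ge': "1 \<le> M1" unfolding M1_def L_def X_def using M1ge .
  have M2ge': "6 \<le> M2" unfolding M2_def L_def X_def using M2ge .
  have Xn: "X \<le> real n / 6" unfolding X_def using pn p0 by (simp add: field_simps)
  have Zpos: "0 < Z"
  proof -
    have "0 < (1 + q) ^ ((n div 2) * (n - n div 2))" using q0 by simp
    also have "\<dots> \<le> Z" unfolding Z_def by (rule Z_lower) (use q0 in simp)
    finally show ?thesis .
  qed
  have w: "dag_weight p E = q ^ card E" for E unfolding dag_weight_def q_def ..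
  let ?good = "{E \<in> dags n. P E}"
  let ?F = "{E \<in> dags n. \<not> P E}"
  have dp: "dag_prob n p P = (\<Sum>E\<in>?good. q ^ card E) / Z" unfolding dag_prob_def w Z_def ..
  have split: "Z = (\<Sum>E\<in>?F. q ^ card E) + (\<Sum>E\<in>?good. q ^ card E)"
  proof -
    have "Z = (\<Sum>E\<in>dags n - ?good. q ^ card E) + (\<Sum>E\<in>?good. q ^ card E)"
      unfolding Z_def by (rule sum.subset_diff) (auto simp: dags_finite)
    moreover have "dags n - ?good = ?F" by auto
    ultimately show ?thesis by simp
  qed
  define u2 where "u2 = 4 * (nat \<lfloor>M2\<rfloor> + 1)"
  let ?A1 = "{G\<in>dags n. h1 n G \<le> nat \<lfloor>M1\<rfloor>}"
  let ?A2 = "{G\<in>dags n. nat \<lceil>M1\<rceil> \<le> h1 n G \<and> h1 n G + u2 \<le> n \<and> h2 n G \<le> nat \<lfloor>M2\<rfloor>}"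
  let ?A3 = "{G\<in>dags n. n < h1 n G + u2}"
  have Fsub: "?F \<subseteq> ?A1 \<union> ?A2 \<union> ?A3"
  proof
    fix G assume G: "G \<in> ?F"
    then have Gd: "G \<in> dags n" and nP: "\<not> P G" by auto
    have PM: "P G \<longleftrightarrow> M1 \<le> real (h1 n G) \<and> M2 \<le> real (h2 n G)"
      unfolding P_def M1_def M2_def L_def X_def ..
    show "G \<in> ?A1 \<union> ?A2 \<union> ?A3"
    proof (cases "M1 \<le> real (h1 n G)")
      case False
      then have "int (h1 n G) \<le> \<lfloor>M1\<rfloor>" by (simp add: le_floor_iff)
      then have "h1 n G \<le> nat \<lfloor>M1\<rfloor>" by linarith
      then show ?thesis using Gd by blast
    next
      case True
      then have h2M: "\<not> M2 \<le> real (h2 n G)" using nP PM by blast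
      have k: "nat \<lceil>M1\<rceil> \<le> h1 n G"
      proof -
        have "\<lceil>M1\<rceil> \<le> int (h1 n G)" using True by (simp add: ceiling_le_iff)
        then show ?thesis by linarith
      qed
      have "int (h2 n G) \<le> \<lfloor>M2\<rfloor>" using h2M by (simp add: le_floor_iff)
      then have m: "h2 n G \<le> nat \<lfloor>M2\<rfloor>" by linarith
      show ?thesis
      proof (cases "h1 n G + u2 \<le> n")
        case True then show ?thesis using Gd k m by blast
      next
        case False then show ?thesis using Gd by auto
      qed
    qed
  qed
  have fin: "finite ?A1" "finite ?A2" "finite ?A3" using dags_finite by auto
  have nn: "0 \<le> q ^ card G" for G using q0 by simp
  have SF: "(\<Sum>E\<in>?F. q ^ card E) \<le> (\<Sum>E\<in>?A1. q ^ card E) + (\<Sum>E\<in>?A2. q ^ card E) + (\<Sum>E\<in>?A3. q ^ card E)"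
  proof -
    have "(\<Sum>E\<in>?F. q ^ card E) \<le> (\<Sum>E\<in>?A1 \<union> ?A2 \<union> ?A3. q ^ card E)"
      by (rule sum_mono2[OF _ Fsub]) (use fin nn in auto)
    also have "\<dots> \<le> (\<Sum>E\<in>?A1 \<union> ?A2. q ^ card E) + (\<Sum>E\<in>?A3. q ^ card E)"
      by (rule sum_Un_le_nn) (use fin nn in auto)
    also have "(\<Sum>E\<in>?A1 \<union> ?A2. q ^ card E) \<le> (\<Sum>E\<in>?A1. q ^ card E) + (\<Sum>E\<in>?A2. q ^ card E)"
      by (rule sum_Un_le_nn) (use fin nn in auto)
    finally show ?thesis by linarith
  qed
  have S1: "(\<Sum>E\<in>?A1. q ^ card E) \<le> Z * g1f X"
    unfolding Z_def
    by (rule part1[OF qX X1 L_def _ M1_def M1ge' Xn n2]) (use L3' g1le X_def in simp_all)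
  have S2: "(\<Sum>E\<in>?A2. q ^ card E) \<le> Z * g2f X"
    unfolding Z_def u2_def
    by (rule part2[OF qX X1 L_def _ M1_def M1ge' M2_def]) (use L3' M2ge' t2le g2le X_def in simp_all)
  have S3: "(\<Sum>E\<in>?A3. q ^ card E) \<le> Z / real n"
    unfolding Z_def u2_def
    by (rule part3[OF p0 q_def X_def pn n2 L_def L3' M2_def M2ge']) (use E3 in \<open>simp add: L_def X_def\<close>)
  have "1 - dag_prob n p P = (\<Sum>E\<in>?F. q ^ card E) / Z"
    unfolding dp using Zpos split by (simp add: field_simps)
  also have "\<dots> \<le> (Z * g1f X + Z * g2f X + Z / real n) / Z"
    using SF S1 S2 S3 Zpos by (intro divide_right_mono) auto
  also have "\<dots> = g1f X + g2f X + 1 / real n" using Zpos by (simp add: field_simps)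
  finally show ?thesis unfolding X_def P_def .
qed


lemma g1f_lim: "(g1f \<longlongrightarrow> 0) at_top"
  unfolding g1f_def[abs_def] Y1f_def by real_asymp
lemma g2f_lim: "(g2f \<longlongrightarrow> 0) at_top"
  unfolding g2f_def[abs_def] Y2f_def by real_asymp
lemma Y2f_lim: "((\<lambda>X. (16*exp 1/3) * Y2f X) \<longlongrightarrow> 0) at_top"
  unfolding Y2f_def by real_asymp
lemma lnX_lim: "filterlim (\<lambda>X::real. ln X) at_top at_top" by real_asymp
lemma M1_lim: "filterlim (\<lambda>X::real. X/(20*ln X)) at_top at_top" by real_asymp
lemma M2_lim: "filterlim (\<lambda>X::real. X/(ln X)^2) at_top at_top" by real_asymp
lemma lnx_small: "filterlim (\<lambda>x::real. x - 80 * ln x) at_top at_top" by real_asymp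

lemma ev_X: "eventually (\<lambda>X::real. 3 \<le> ln X \<and> 1 \<le> X/(20*ln X) \<and> 6 \<le> X/(ln X)^2 \<and> g1f X \<le> 1 \<and>
    (16*exp 1/3) * Y2f X \<le> 1 \<and> g2f X \<le> 1) at_top"
proof -
  have a: "eventually (\<lambda>X::real. 3 \<le> ln X) at_top" using lnX_lim by (simp add: filterlim_at_top)
  have b: "eventually (\<lambda>X::real. 1 \<le> X/(20*ln X)) at_top" using M1_lim by (simp add: filterlim_at_top)
  have c: "eventually (\<lambda>X::real. 6 \<le> X/(ln X)^2) at_top" using M2_lim by (simp add: filterlim_at_top)
  have d: "eventually (\<lambda>X. g1f X < 1) at_top" using order_tendstoD(2)[OF g1f_lim] by simp
  have e: "eventually (\<lambda>X. (16*exp 1/3) * Y2f X < 1) at_top" using order_tendstoD(2)[OF Y2f_lim zero_less_one] .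
  have f: "eventually (\<lambda>X. g2f X < 1) at_top" using order_tendstoD(2)[OF g2f_lim] by simp
  show ?thesis using a b c d e f by eventually_elim auto
qed

lemma dag_prob_le1:
  assumes "0 < p" "p < 1"
  shows "dag_prob n p P \<le> 1"
proof -
  define q where "q = p / (1 - p)"
  have q0: "0 < q" unfolding q_def using assms by simp
  have w: "dag_weight p E = q ^ card E" for E unfolding dag_weight_def q_def ..
  have Zpos: "0 < (\<Sum>G\<in>dags n. q ^ card G)"
  proof -
    have "0 < (1 + q) ^ ((n div 2) * (n - n div 2))" using q0 by simp
    also have "\<dots> \<le> (\<Sum>G\<in>dags n. q ^ card G)" by (rule Z_lower) (use q0 in simp)
    finally show ?thesis .
  qed
  have "(\<Sum>E\<in>{E \<in> dags n. P E}. q ^ card E) \<le> (\<Sum>G\<in>dags n. q ^ card G)"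
    by (rule sum_mono2[OF dags_finite]) (use q0 in auto)
  then show ?thesis unfolding dag_prob_def w using Zpos by simp
qed

theorem mainTheorem7:
  fixes p :: "nat \<Rightarrow> real"
  assumes "\<forall>\<^sub>F n in sequentially. 6 / real n \<le> p n \<and> p n < 1"
    and "(\<lambda>n. p n * ln (real n)) \<longlonglongrightarrow> 0"
  shows "(\<lambda>n. dag_prob n (p n) (\<lambda>E.
            real (h1 n E) \<ge> (1 / p n) / (20 * ln (1 / p n)) \<and>
            real (h2 n E) \<ge> (1 / p n) / (ln (1 / p n))^2)) \<longlonglongrightarrow> 1"
proof -
  define dp where "dp n = dag_prob n (p n) (\<lambda>E.
            real (h1 n E) \<ge> (1 / p n) / (20 * ln (1 / p n)) \<and>
            real (h2 n E) \<ge> (1 / p n) / (ln (1 / p n))^2)" for n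
  have ev1: "eventually (\<lambda>n. 6 / real n \<le> p n \<and> p n < 1 \<and> 3 \<le> n) sequentially"
    using assms(1) eventually_ge_at_top[of 3] by eventually_elim auto
  have ppos: "eventually (\<lambda>n. 0 < p n) sequentially"
    using ev1
  proof eventually_elim
    case (elim n)
    have "0 < 6 / real n" using elim by simp
    then show ?case using elim by linarith
  qed
  have p_lim: "p \<longlonglongrightarrow> 0"
  proof (rule tendsto_sandwich[OF _ _ tendsto_const assms(2)])
    show "eventually (\<lambda>n. 0 \<le> p n) sequentially" using ppos by eventually_elim simp
    show "eventually (\<lambda>n. p n \<le> p n * ln (real n)) sequentially"
      using ev1 ppos
    proof eventually_elim
      case (elim n)
      have "exp 1 \<le> real n"
      proof -
        have "exp (1::real) \<le> 3" using exp_le by simp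
        then show ?thesis using elim(1) by linarith
      qed
      then have "1 \<le> ln (real n)" using elim(1) by (subst ln_ge_iff) auto
      then show ?case using elim(2) by (simp add: mult_le_cancel_left1)
    qed
  qed
  have X_lim: "filterlim (\<lambda>n. 1 / p n) at_top sequentially"
    using filterlim_inverse_at_top[OF p_lim ppos] by (simp add: inverse_eq_divide)
  have evX: "eventually (\<lambda>n. 3 \<le> ln (1 / p n) \<and> 1 \<le> (1 / p n)/(20*ln (1 / p n)) \<and> 6 \<le> (1 / p n)/(ln (1 / p n))^2 \<and>
      g1f (1 / p n) \<le> 1 \<and> (16*exp 1/3) * Y2f (1 / p n) \<le> 1 \<and> g2f (1 / p n) \<le> 1) sequentially"
    using filterlim_iff[THEN iffD1, OF X_lim, rule_format, OF ev_X] .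
  have evn: "eventually (\<lambda>n. 80 * ln (real n) \<le> real n \<and> 9 \<le> ln (real n)) sequentially"
  proof -
    have a: "eventually (\<lambda>x::real. 0 \<le> x - 80 * ln x) at_top"
      using filterlim_at_top[THEN iffD1, OF lnx_small, rule_format, of 0] .
    have b: "eventually (\<lambda>x::real. 9 \<le> ln x) at_top" using lnX_lim by (simp add: filterlim_at_top)
    have "eventually (\<lambda>x::real. 80 * ln x \<le> x \<and> 9 \<le> ln x) at_top" using a b by eventually_elim auto
    then show ?thesis using filterlim_iff[THEN iffD1, OF filterlim_real_sequentially, rule_format] by blast
  qed
  have bound: "eventually (\<lambda>n. 1 - dp n \<le> g1f (1 / p n) + g2f (1 / p n) + 1 / real n) sequentially"
    using ev1 ppos evX evn
  proof eventually_elim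
    case (elim n)
    have p0: "0 < p n" "p n < 1" using elim by auto
    have n0: "0 < real n" using elim(1) by simp
    have pn: "6 \<le> p n * real n" using elim(1) n0 by (simp add: divide_le_eq)
    have L1: "1 \<le> ln (1 / p n)" using elim(3) by simp
    have E3: "80 * ln (real n) \<le> (p n)^2 * (real n)^2 * (ln (1 / p n))^2"
    proof (cases "1 \<le> (p n)^2 * real n")
      case True
      have "80 * ln (real n) \<le> real n" using elim(4) by simp
      also have "\<dots> \<le> (p n)^2 * real n * real n" using True n0 by (simp add: mult_le_cancel_right1)
      also have "\<dots> \<le> (p n)^2 * real n * real n * (ln (1 / p n))^2"
      proof -
        have "1 \<le> (ln (1 / p n))^2" using L1 by (simp add: one_le_power)
        moreover have "0 \<le> (p n)^2 * real n * real n" using n0 by simp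
        ultimately show ?thesis using mult_left_mono[of 1 "(ln (1 / p n))^2" "(p n)^2 * real n * real n"] by simp
      qed
      finally show ?thesis by (simp add: power2_eq_square algebra_simps)
    next
      case False
      then have lt: "(p n)^2 * real n < 1" by simp
      have "real n < (1 / p n)^2" using lt p0 by (simp add: field_simps)
      then have "ln (real n) < ln ((1 / p n)^2)" using n0 by (intro ln_less_cancel_iff[THEN iffD2]) auto
      also have "\<dots> = 2 * ln (1 / p n)" using p0 by (simp add: ln_realpow)
      finally have lnL: "ln (real n) / 2 \<le> ln (1 / p n)" by simp
      have l9: "9 \<le> ln (real n)" using elim(4) by simp
      have "36 \<le> (p n * real n)^2"
      proof -
        have "6 * 6 \<le> (p n * real n) * (p n * real n)" using pn by (intro mult_mono) auto
        then show ?thesis by (simp add: power2_eq_square)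
      qed
      moreover have "(ln (real n) / 2)^2 \<le> (ln (1 / p n))^2" using lnL l9 by (intro power_mono) auto
      ultimately have "36 * (ln (real n) / 2)^2 \<le> (p n * real n)^2 * (ln (1 / p n))^2"
        by (intro mult_mono) auto
      moreover have "80 * ln (real n) \<le> 36 * (ln (real n) / 2)^2"
      proof -
        define l where "l = ln (real n)"
        have "9 * l \<le> l * l" using l9 unfolding l_def by (intro mult_right_mono) auto
        moreover have "36 * (l / 2)^2 = 9 * (l * l)" by (simp add: power2_eq_square)
        ultimately show ?thesis using l9 unfolding l_def[symmetric] by linarith
      qed
      ultimately show ?thesis by (simp add: power_mult_distrib)
    qed
    have n2: "2 \<le> n" using elim(1) by simp
    show ?case unfolding dp_def
      by (rule per_n[OF p0 pn n2]) (use elim E3 in auto)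
  qed
  have lim0: "(\<lambda>n. g1f (1 / p n) + g2f (1 / p n) + 1 / real n) \<longlonglongrightarrow> 0"
  proof -
    have "(\<lambda>n. g1f (1 / p n)) \<longlonglongrightarrow> 0" by (rule filterlim_compose[OF g1f_lim X_lim])
    moreover have "(\<lambda>n. g2f (1 / p n)) \<longlonglongrightarrow> 0" by (rule filterlim_compose[OF g2f_lim X_lim])
    moreover have "(\<lambda>n. 1 / real n) \<longlonglongrightarrow> 0" by (rule lim_const_over_n)
    ultimately have "(\<lambda>n. g1f (1 / p n) + g2f (1 / p n) + 1 / real n) \<longlonglongrightarrow> 0 + 0 + 0"
      by (intro tendsto_add)
    then show ?thesis by simp
  qed
  have "(\<lambda>n. 1 - dp n) \<longlonglongrightarrow> 0"
  proof (rule tendsto_sandwich[OF _ bound tendsto_const lim0])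
    show "eventually (\<lambda>n. 0 \<le> 1 - dp n) sequentially"
      using ev1 ppos by eventually_elim (use dag_prob_le1 in \<open>simp add: dp_def\<close>)
  qed
  then have "(\<lambda>n. 1 - (1 - dp n)) \<longlonglongrightarrow> 1 - 0" by (intro tendsto_diff tendsto_const)
  then show ?thesis unfolding dp_def by simp
qed

end
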